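(* Let $N\ge 5$ be an odd integer. If $A$ is an efficiently structured polyomino with square $(N-2)\times(N-2)$ interior, then every space of the interior lying in an odd row of $W$ (i.e. every interior space $(i,j)$ with $i$ and $j$ both odd) is a hole of $A$.
   Context: A polyomino is a finite union of closed unit tiles, meeting only in whole edges, with connected interior; holes are bounded components of the complement, area of a hole = number of unit squares filling it; acyclic means the dual graph (tiles, adjacency along edges) is a tree. A polyomino with $n$ tiles and $h$ holes is efficiently structured if it is acyclic, every hole has area one, and its number of outer (non-hole) boundary edges equals $2\lceil 2\sqrt{n+h}\,\rceil$. $A$ has square $(N-2)\times(N-2)$ interior if its bounding box is $N\times N$ and every space of the outer ring of the bounding box except possibly the four corners is a tile; the interior is the inner $(N-2)\times(N-2)$ square, with spaces indexed $(i,j)$, $1\le i,j\le N-2$ from the top-left, and $W$ the spaces with $i+j$ even. *)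

theory Defs
  imports Complex_Main
begin

type_synonym cell = "int \<times> int"

text \<open>Unit squares (spaces) of the plane are indexed by integer pairs (row, column);
  two spaces are adjacent iff they share a whole edge.\<close>
definition adj :: "cell \<Rightarrow> cell \<Rightarrow> bool" where
  "adj p q \<longleftrightarrow> \<bar>fst p - fst q\<bar> + \<bar>snd p - snd q\<bar> = 1"

definition adj_in :: "cell set \<Rightarrow> cell \<Rightarrow> cell \<Rightarrow> bool" where
  "adj_in S p q \<longleftrightarrow> p \<in> S \<and> q \<in> S \<and> adj p q"

definition connected_cells :: "cell set \<Rightarrow> bool" where
  "connected_cells S \<longleftrightarrow> (\<forall>p\<in>S. \<forall>q\<in>S. (adj_in S)\<^sup>*\<^sup>* p q)"

text \<open>A polyomino (set of tiles): finite, nonempty, with connected interior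
  (equivalently, tiles connected through shared edges).\<close>
definition polyomino :: "cell set \<Rightarrow> bool" where
  "polyomino A \<longleftrightarrow> finite A \<and> A \<noteq> {} \<and> connected_cells A"

text \<open>Connected components of the complement (spaces connected through shared edges;
  corner contacts do not connect the open complement).  Holes are the bounded,
  i.e. finite, components.\<close>
definition comp_of :: "cell set \<Rightarrow> cell \<Rightarrow> cell set" where
  "comp_of S p = {q. (adj_in S)\<^sup>*\<^sup>* p q}"

definition holes :: "cell set \<Rightarrow> cell set set" where
  "holes A = {H. \<exists>p. p \<notin> A \<and> H = comp_of (- A) p \<and> finite H}"

text \<open>Acyclic: the dual graph (tiles, adjacency along edges) is a tree, i.e.
  connected and without cycles (a cycle = a list of at least 3 distinct tiles,
  consecutive ones adjacent, the last adjacent to the first).\<close>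
definition has_cycle :: "cell set \<Rightarrow> bool" where
  "has_cycle A \<longleftrightarrow> (\<exists>xs. length xs \<ge> 3 \<and> distinct xs \<and> set xs \<subseteq> A \<and>
      (\<forall>i < length xs - 1. adj (xs ! i) (xs ! Suc i)) \<and> adj (last xs) (hd xs))"

definition acyclic_poly :: "cell set \<Rightarrow> bool" where
  "acyclic_poly A \<longleftrightarrow> connected_cells A \<and> \<not> has_cycle A"

text \<open>Outer boundary edges: edges between a tile and a non-tile space that
  does not belong to a hole (each such edge is identified with the pair
  (tile, outside space)).\<close>
definition outer_boundary :: "cell set \<Rightarrow> (cell \<times> cell) set" where
  "outer_boundary A = {(p, q). p \<in> A \<and> q \<notin> A \<and> adj p q \<and> (\<forall>H\<in>holes A. q \<notin> H)}"

definition efficiently_structured :: "cell set \<Rightarrow> bool" where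
  "efficiently_structured A \<longleftrightarrow> polyomino A \<and> acyclic_poly A \<and>
     (\<forall>H\<in>holes A. card H = 1) \<and>
     card (outer_boundary A) =
       2 * nat \<lceil>2 * sqrt (real (card A + card (holes A)))\<rceil>"

text \<open>Square (N-2)x(N-2) interior, with the bounding box's top-left space at (x0, y0):
  the bounding box is N x N and every non-corner space of its outer ring is a tile.
  Interior space (i,j), 1 \<le> i,j \<le> N-2, is the space (x0 + i, y0 + j).\<close>
definition square_interior :: "cell set \<Rightarrow> nat \<Rightarrow> int \<Rightarrow> int \<Rightarrow> bool" where
  "square_interior A N x0 y0 \<longleftrightarrow>
     A \<subseteq> {x0 .. x0 + int N - 1} \<times> {y0 .. y0 + int N - 1} \<and>
     (\<forall>i j. 0 \<le> i \<and> i \<le> int N - 1 \<and> 0 \<le> j \<and> j \<le> int N - 1 \<and>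
        (i = 0 \<or> i = int N - 1 \<or> j = 0 \<or> j = int N - 1) \<and>
        \<not> ((i = 0 \<or> i = int N - 1) \<and> (j = 0 \<or> j = int N - 1))
        \<longrightarrow> (x0 + i, y0 + j) \<in> A)"

end

theory Submission
  imports Defs
begin


definition gcyc :: "('a \<Rightarrow> 'a \<Rightarrow> bool) \<Rightarrow> 'a set \<Rightarrow> bool" where
  "gcyc R S \<longleftrightarrow> (\<exists>xs. length xs \<ge> 3 \<and> distinct xs \<and> set xs \<subseteq> S \<and>
      (\<forall>i < length xs - 1. R (xs ! i) (xs ! Suc i)) \<and> R (last xs) (hd xs))"

definition edges :: "('a \<Rightarrow> 'a \<Rightarrow> bool) \<Rightarrow> 'a set \<Rightarrow> ('a \<times> 'a) set" where
  "edges R S = {(x,y). x \<in> S \<and> y \<in> S \<and> R x y}"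

lemma gcyc_mono: "gcyc R S \<Longrightarrow> S \<subseteq> T \<Longrightarrow> gcyc R T"
  unfolding gcyc_def by blast

lemma has_cycle_gcyc: "has_cycle A = gcyc adj A"
  unfolding has_cycle_def gcyc_def by simp

fun walkp :: "('a \<Rightarrow> 'a \<Rightarrow> 'a) \<Rightarrow> 'a \<Rightarrow> 'a \<Rightarrow> nat \<Rightarrow> 'a \<times> 'a" where
  "walkp nx u v 0 = (u, v)"
| "walkp nx u v (Suc k) = (let (p, q) = walkp nx u v k in (q, nx p q))"

lemma leaf_exists:
  assumes fin: "finite S" and ne: "S \<noteq> {}"
    and irr: "\<And>x. \<not> R x x"
    and nc: "\<not> gcyc R S"
  shows "\<exists>v\<in>S. \<not> (\<exists>y1 y2. y1 \<in> S \<and> y2 \<in> S \<and> y1 \<noteq> y2 \<and> R v y1 \<and> R v y2)"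
proof (rule ccontr)
  assume "\<not> ?thesis"
  then have two: "\<And>v. v \<in> S \<Longrightarrow> \<exists>y1 y2. y1 \<in> S \<and> y2 \<in> S \<and> y1 \<noteq> y2 \<and> R v y1 \<and> R v y2" by blast
  have nx: "\<And>u v. v \<in> S \<Longrightarrow> \<exists>w. w \<in> S \<and> R v w \<and> w \<noteq> u"
    using two by metis
  define nx where "nx = (\<lambda>u v. SOME w. w \<in> S \<and> R v w \<and> w \<noteq> u)"
  have nxp: "\<And>u v. v \<in> S \<Longrightarrow> nx u v \<in> S \<and> R v (nx u v) \<and> nx u v \<noteq> u"
    unfolding nx_def using nx by (metis (mono_tags, lifting) someI_ex)
  obtain v0 where v0: "v0 \<in> S" using ne by blast
  obtain v1 where v1: "v1 \<in> S" "R v0 v1" using two[OF v0] by blast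
  define w where "w = (\<lambda>k. fst (walkp nx v0 v1 k))"
  have wp: "\<And>k. snd (walkp nx v0 v1 k) = w (Suc k)"
    unfolding w_def by (simp add: case_prod_beta)
  have inv: "\<And>k. w k \<in> S \<and> w (Suc k) \<in> S \<and> R (w k) (w (Suc k))"
  proof -
    fix k show "w k \<in> S \<and> w (Suc k) \<in> S \<and> R (w k) (w (Suc k))"
    proof (induction k)
      case 0 then show ?case using v0 v1 by (simp add: w_def)
    next
      case (Suc k)
      have e: "w (Suc (Suc k)) = nx (w k) (w (Suc k))"
        unfolding w_def by (simp add: case_prod_beta)
      then show ?case using Suc nxp by auto
    qed
  qed
  have nb: "\<And>k. w (Suc (Suc k)) \<noteq> w k"
  proof -
    fix k
    have e: "w (Suc (Suc k)) = nx (w k) (w (Suc k))"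
      unfolding w_def by (simp add: case_prod_beta)
    show "w (Suc (Suc k)) \<noteq> w k" using e nxp inv by auto
  qed
  have "\<not> inj_on w {..card S}"
  proof
    assume "inj_on w {..card S}"
    then have "card (w ` {..card S}) = Suc (card S)" by (simp add: card_image)
    moreover have "w ` {..card S} \<subseteq> S" using inv by auto
    ultimately show False using card_mono[OF fin] by (metis Suc_n_not_le_n)
  qed
  then obtain a b where ab: "a \<noteq> b" "w a = w b" unfolding inj_on_def by blast
  have "\<exists>j. \<exists>i<j. w i = w j"
  proof (cases "a < b")
    case True then show ?thesis using ab by blast
  next
    case False then have "b < a" using ab(1) by simp
    then show ?thesis using ab(2) by metis
  qed
  then obtain j where j: "\<exists>i<j. w i = w j" and jmin: "\<And>j'. j' < j \<Longrightarrow> \<not> (\<exists>i<j'. w i = w j')"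
    using exists_least_iff[of "\<lambda>j. \<exists>i<j. w i = w j"] by blast
  obtain i where i: "i < j" "w i = w j" using j by blast
  have injw: "inj_on w {..<j}"
  proof (rule inj_onI)
    fix x y assume x: "x \<in> {..<j}" and y: "y \<in> {..<j}" and e: "w x = w y"
    show "x = y"
    proof (rule ccontr)
      assume "x \<noteq> y"
      then consider "x < y" | "y < x" by linarith
      then show False
      proof cases
        case 1 then show False using jmin[of y] y e by auto
      next
        case 2 then show False using jmin[of x] x e by auto
      qed
    qed
  qed
  define xs where "xs = map w [i..<j]"
  have len: "length xs = j - i" unfolding xs_def by simp
  have "j \<noteq> Suc i"
  proof
    assume "j = Suc i"
    then have "R (w i) (w i)" using inv[of i] i(2) by simp
    then show False using irr by blast
  qed
  moreover have "j \<noteq> Suc (Suc i)" using i(2) nb[of i] by auto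
  ultimately have len3: "length xs \<ge> 3" using len i(1) by linarith
  have "inj_on w {i..<j}" by (rule inj_on_subset[OF injw]) auto
  then have dist: "distinct xs" unfolding xs_def by (simp add: distinct_map)
  have st: "set xs \<subseteq> S" unfolding xs_def using inv by auto
  have cons: "\<forall>k < length xs - 1. R (xs ! k) (xs ! Suc k)"
  proof (intro allI impI)
    fix k assume k: "k < length xs - 1"
    then have "xs ! k = w (i + k)" "xs ! Suc k = w (Suc (i + k))" unfolding xs_def using len by auto
    then show "R (xs ! k) (xs ! Suc k)" using inv[of "i+k"] by simp
  qed
  have lst: "last xs = w (j - 1)" unfolding xs_def using i
    by (simp add: last_map)
  have hd: "hd xs = w j" unfolding xs_def using i by (simp add: hd_map hd_upt)
  have "R (last xs) (hd xs)" using lst hd inv[of "j - 1"] i by simp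
  then have "gcyc R S" unfolding gcyc_def using len3 dist st cons by blast
  then show False using nc by blast
qed

lemma edges_bound:
  assumes "finite S" "S \<noteq> {}" "\<And>x. \<not> R x x" "\<And>x y. R x y \<Longrightarrow> R y x" "\<not> gcyc R S"
  shows "card (edges R S) + 2 \<le> 2 * card S"
  using assms
proof (induction "card S" arbitrary: S rule: less_induct)
  case less
  obtain v where v: "v \<in> S" and lf: "\<not> (\<exists>y1 y2. y1 \<in> S \<and> y2 \<in> S \<and> y1 \<noteq> y2 \<and> R v y1 \<and> R v y2)"
    using leaf_exists[of S R] less.prems by blast
  define Nv where "Nv = {y \<in> S. R v y}"
  have fN: "finite Nv" unfolding Nv_def using less.prems(1) by simp
  have "card Nv \<le> Suc 0"
    using lf fN by (subst card_le_Suc0_iff_eq) (auto simp: Nv_def)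
  then have cN: "card Nv \<le> 1" by simp
  show ?case
  proof (cases "S - {v} = {}")
    case True
    then have "S = {v}" using v by blast
    then have "edges R S = {}" unfolding edges_def using less.prems(3) by auto
    then show ?thesis using \<open>S = {v}\<close> by simp
  next
    case False
    let ?S = "S - {v}"
    have lt: "card ?S < card S" using v less.prems(1) by (metis card_Diff1_less)
    have fS: "finite ?S" using less.prems(1) by simp
    have ncS: "\<not> gcyc R ?S" using less.prems(5) gcyc_mono[of R ?S S] by blast
    have IH: "card (edges R ?S) + 2 \<le> 2 * card ?S"
      using less.hyps[OF lt fS False less.prems(3) less.prems(4) ncS] by blast
    have sub: "edges R S \<subseteq> edges R ?S \<union> ({v} \<times> Nv) \<union> (Nv \<times> {v})"
    proof
      fix e assume "e \<in> edges R S"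
      then obtain x y where e: "e = (x,y)" "x \<in> S" "y \<in> S" "R x y" unfolding edges_def by blast
      show "e \<in> edges R ?S \<union> ({v} \<times> Nv) \<union> (Nv \<times> {v})"
      proof (cases "x = v \<or> y = v")
        case True
        then show ?thesis using e less.prems(4)[of x y] unfolding Nv_def by blast
      next
        case False
        then show ?thesis using e unfolding edges_def by blast
      qed
    qed
    have fE: "finite (edges R ?S)" unfolding edges_def
      by (rule finite_subset[of _ "?S \<times> ?S"]) (use fS in auto)
    have "card (edges R S) \<le> card (edges R ?S \<union> ({v} \<times> Nv) \<union> (Nv \<times> {v}))"
      by (rule card_mono) (use fN fE sub in auto)
    also have "\<dots> \<le> card (edges R ?S) + card ({v} \<times> Nv) + card (Nv \<times> {v})"
      using card_Un_le[of "edges R ?S \<union> ({v} \<times> Nv)" "Nv \<times> {v}"] card_Un_le[of "edges R ?S" "{v} \<times> Nv"] by linarith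
    also have "\<dots> \<le> card (edges R ?S) + 2"
      using cN by (simp add: card_cartesian_product)
    finally have E: "card (edges R S) \<le> card (edges R ?S) + 2" .
    have cS: "card ?S = card S - 1" using v by simp
    have "card S \<noteq> 0" using less.prems(1,2) by simp
    then show ?thesis using E IH cS by linarith
  qed
qed



definition box :: "nat \<Rightarrow> cell set" where
  "box N = {0..int N - 1} \<times> {0..int N - 1}"
definition inner :: "nat \<Rightarrow> cell set" where
  "inner N = {1..int N - 2} \<times> {1..int N - 2}"
definition corners :: "nat \<Rightarrow> cell set" where
  "corners N = {(0,0), (0, int N - 1), (int N - 1, 0), (int N - 1, int N - 1)}"
definition diag :: "cell \<Rightarrow> cell \<Rightarrow> bool" where
  "diag p q \<longleftrightarrow> \<bar>fst p - fst q\<bar> = 1 \<and> \<bar>snd p - snd q\<bar> = 1"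

definition Rd :: "nat \<Rightarrow> cell option \<Rightarrow> cell option \<Rightarrow> bool" where
  "Rd N x y = (case x of None \<Rightarrow> (case y of None \<Rightarrow> False | Some q \<Rightarrow> q \<in> corners N)
     | Some p \<Rightarrow> (case y of None \<Rightarrow> p \<in> corners N | Some q \<Rightarrow> diag p q))"

lemma Rd_simps[simp]:
  "Rd N (Some p) (Some q) = diag p q"
  "Rd N None (Some q) = (q \<in> corners N)"
  "Rd N (Some p) None = (p \<in> corners N)"
  "\<not> Rd N None None"
  unfolding Rd_def by auto

lemma diag_sym: "diag p q \<Longrightarrow> diag q p" unfolding diag_def by auto
lemma Rd_sym: "Rd N x y \<Longrightarrow> Rd N y x"
  by (cases x; cases y) (auto simp: diag_sym)
lemma Rd_irr: "\<not> Rd N x x"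
  by (cases x) (auto simp: diag_def)

lemma adj_cases:
  assumes "adj p q"
  shows "q = (fst p + 1, snd p) \<or> q = (fst p - 1, snd p) \<or> q = (fst p, snd p + 1) \<or> q = (fst p, snd p - 1)"
proof -
  obtain a b c d where pq: "p = (a,b)" "q = (c,d)" by (cases p, cases q)
  have "\<bar>a - c\<bar> + \<bar>b - d\<bar> = 1" using assms pq unfolding adj_def by simp
  then have "(c = a + 1 \<and> d = b) \<or> (c = a - 1 \<and> d = b) \<or> (c = a \<and> d = b + 1) \<or> (c = a \<and> d = b - 1)"
    by (auto simp: abs_if split: if_splits)
  then show ?thesis using pq by auto
qed

lemma adj_sym: "adj p q \<Longrightarrow> adj q p" unfolding adj_def by (simp add: abs_minus_commute add.commute)

definition Up :: "cell option \<Rightarrow> cell option \<Rightarrow> int \<Rightarrow> int \<Rightarrow> bool" where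
  "Up x y a b \<longleftrightarrow> (\<exists>s. s > b \<and> x = Some (a,s) \<and> (y = Some (a-1,s-1) \<or> y = Some (a-1,s+1) \<or> (a = 0 \<and> y = None)))"
definition Dn :: "cell option \<Rightarrow> cell option \<Rightarrow> int \<Rightarrow> int \<Rightarrow> bool" where
  "Dn x y a b \<longleftrightarrow> (\<exists>s. s > b \<and> x = Some (a,s) \<and> (y = Some (a+1,s-1) \<or> y = Some (a+1,s+1)))"

definition cr :: "cell option list \<Rightarrow> int \<Rightarrow> int \<Rightarrow> nat" where
  "cr g a b = (\<Sum>k<length g. of_bool (Up (g!k) (g!(Suc k mod length g)) a b)
                             + of_bool (Up (g!(Suc k mod length g)) (g!k) a b))"

lemma pv_nx: "k < m \<Longrightarrow> (Suc k mod m + m - 1) mod m = k"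
proof -
  assume k: "k < m"
  show ?thesis
  proof (cases "Suc k = m")
    case True
    then have "Suc k mod m = 0" by simp
    then have "Suc k mod m + m - 1 = k" using True by simp
    then show ?thesis using k by simp
  next
    case False then have "Suc k < m" using k by simp
    then have "Suc k mod m + m - 1 = k + m" by simp
    then show ?thesis using k by simp
  qed
qed

lemma nx_pv: "k < m \<Longrightarrow> Suc ((k + m - 1) mod m) mod m = k"
proof -
  assume k: "k < m"
  show ?thesis
  proof (cases "k = 0")
    case True
    then have "(k + m - 1) mod m = m - 1" using k by simp
    then show ?thesis using k True by simp
  next
    case False
    then have e: "k + m - 1 = (k - 1) + m" by simp
    have "(k - 1 + m) mod m = k - 1" using k by simp
    then have "(k + m - 1) mod m = k - 1" using e by simp
    then show ?thesis using k False by simp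
  qed
qed

lemma nx_bij: "m > 0 \<Longrightarrow> bij_betw (\<lambda>k. Suc k mod m) {..<m} {..<m}"
proof -
  assume m: "m > 0"
  have inj: "inj_on (\<lambda>k. Suc k mod m) {..<m}"
  proof (rule inj_onI)
    fix x y assume "x \<in> {..<m}" "y \<in> {..<m}" "Suc x mod m = Suc y mod m"
    then show "x = y" using pv_nx[of x m] pv_nx[of y m] by simp
  qed
  have sub: "(\<lambda>k. Suc k mod m) ` {..<m} \<subseteq> {..<m}" using m by auto
  have "card ((\<lambda>k. Suc k mod m) ` {..<m}) = card {..<m}" using inj by (rule card_image)
  then have "(\<lambda>k. Suc k mod m) ` {..<m} = {..<m}" using sub card_subset_eq[of "{..<m}"] by blast
  then show ?thesis using inj unfolding bij_betw_def by blast
qed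

lemma sum_shift: "m > 0 \<Longrightarrow> (\<Sum>k<m. f (Suc k mod m)) = (\<Sum>k<m. (f k :: nat))"
  using sum.reindex_bij_betw[OF nx_bij, of m f] by simp

locale core =
  fixes B :: "cell set" and N :: nat
  assumes oddN: "odd N" and N5: "N \<ge> 5"
    and Bbox: "B \<subseteq> box N"
    and ring: "box N - inner N - corners N \<subseteq> B"
    and conn: "connected_cells B"
    and acyc: "\<not> has_cycle B"
    and iso: "\<And>p q. p \<in> inner N \<Longrightarrow> p \<notin> B \<Longrightarrow> adj p q \<Longrightarrow> q \<in> B"
    and count: "(N-1)*(N-1) \<le> 3 * card (inner N - B) + card (corners N - B)"
begin

definition "Z = box N - B"
definition "V' = insert None (Some ` Z)"

end

locale walk = core +
  fixes g :: "cell option list" and m :: nat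
  assumes m: "length g = m" "m > 0"
    and st: "set g \<subseteq> V'"
    and wk: "\<forall>k<m. Rd N (g!k) (g!(Suc k mod m))"
begin

lemma notB: "k < m \<Longrightarrow> g!k = Some p \<Longrightarrow> p \<notin> B"
proof -
  assume "k < m" "g!k = Some p"
  then have "Some p \<in> set g" using m by (metis nth_mem)
  then show "p \<notin> B" using st unfolding V'_def Z_def by auto
qed

lemma notB': "x \<in> set g \<Longrightarrow> x = Some p \<Longrightarrow> p \<notin> B"
  using st unfolding V'_def Z_def by auto

lemma nxm: "k < m \<Longrightarrow> Suc k mod m < m" using m by simp
lemma pvm: "k < m \<Longrightarrow> (k + m - 1) mod m < m" using m by simp
lemma gin: "k < m \<Longrightarrow> g!k \<in> set g" using m by auto

lemma H: assumes hb: "(a', b'+1) \<in> B" shows "cr g a' b' = cr g a' (b'+1)"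
proof -
  have t: "Up x y a' b' = Up x y a' (b'+1)" if "x \<in> set g" for x y
  proof
    assume "Up x y a' b'"
    then obtain s' where s': "s' > b'" "x = Some (a',s')" "(y = Some (a'-1,s'-1) \<or> y = Some (a'-1,s'+1) \<or> (a' = 0 \<and> y = None))"
      unfolding Up_def by blast
    have "s' \<noteq> b' + 1" using notB'[OF that s'(2)] hb by auto
    then have "s' > b' + 1" using s'(1) by simp
    then show "Up x y a' (b'+1)" unfolding Up_def using s'(2,3) by blast
  next
    assume "Up x y a' (b'+1)"
    then obtain s' where s': "s' > b'+1" "x = Some (a',s')" "(y = Some (a'-1,s'-1) \<or> y = Some (a'-1,s'+1) \<or> (a' = 0 \<and> y = None))"
      unfolding Up_def by blast
    then have "s' > b'" by simp
    then show "Up x y a' b'" unfolding Up_def using s'(2,3) by blast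
  qed
  show ?thesis unfolding cr_def m(1)
  proof (rule sum.cong[OF refl])
    fix k assume "k \<in> {..<m}"
    then have "g!k \<in> set g" "g!(Suc k mod m) \<in> set g" using gin nxm by auto
    then show "of_bool (Up (g!k) (g!(Suc k mod m)) a' b') + of_bool (Up (g!(Suc k mod m)) (g!k) a' b')
      = of_bool (Up (g!k) (g!(Suc k mod m)) a' (b'+1)) + (of_bool (Up (g!(Suc k mod m)) (g!k) a' (b'+1)) :: nat)"
      using t[of "g!k"] t[of "g!(Suc k mod m)"] by simp
  qed
qed

end


lemma sum4: "(\<Sum>k<m. (X k + Y k) + (P k + Q k)) = (\<Sum>k<m. X k + Y k) + ((\<Sum>k<m. P k) + (\<Sum>k<m. (Q k :: nat)))"
  by (simp add: sum.distrib)

context walk begin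

lemma V:
  assumes hb: "(a', b') \<in> B" "(a'+1, b') \<in> B"
  shows "even (cr g a' b' + cr g (a'+1) b')"
proof -
  have a0: "0 \<le> a'" "a' + 1 \<le> int N - 1" using hb Bbox unfolding box_def by auto
  define phi where "phi = (\<lambda>x y. of_bool (Up x y a' b') + of_bool (Dn x y a' b') :: nat)"
  have t: "Up x y (a'+1) b' = Dn y x a' b'" if "x \<in> set g" "y \<in> set g" for x y
  proof
    assume "Up x y (a'+1) b'"
    then obtain s' where s': "s' > b'" "x = Some (a'+1,s')" "(y = Some (a',s'-1) \<or> y = Some (a',s'+1))"
      unfolding Up_def using a0 by auto
    have ny: "y \<noteq> Some (a', b')" using notB'[OF that(2)] hb by auto
    show "Dn y x a' b'"
    proof (cases "y = Some (a',s'-1)")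
      case True
      then have "s' - 1 \<noteq> b'" using ny by auto
      then have "s' - 1 > b'" using s'(1) by simp
      then show ?thesis unfolding Dn_def using True s'(2) by auto
    next
      case False
      then have "y = Some (a', s'+1)" using s'(3) by simp
      then show ?thesis unfolding Dn_def using s'(1,2) by auto
    qed
  next
    assume "Dn y x a' b'"
    then obtain s' where s': "s' > b'" "y = Some (a',s')" "(x = Some (a'+1,s'-1) \<or> x = Some (a'+1,s'+1))"
      unfolding Dn_def by blast
    have nx: "x \<noteq> Some (a'+1, b')" using notB'[OF that(1)] hb by auto
    show "Up x y (a'+1) b'"
    proof (cases "x = Some (a'+1,s'-1)")
      case True
      then have "s' - 1 \<noteq> b'" using nx by auto
      then have "s' - 1 > b'" using s'(1) by simp
      then show ?thesis unfolding Up_def using True s'(2) by auto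
    next
      case False
      then have "x = Some (a'+1, s'+1)" using s'(3) by simp
      then show ?thesis unfolding Up_def using s'(1,2) by auto
    qed
  qed
  have cr2: "cr g (a'+1) b' = (\<Sum>k<m. of_bool (Dn (g!(Suc k mod m)) (g!k) a' b') + of_bool (Dn (g!k) (g!(Suc k mod m)) a' b'))"
    unfolding cr_def m(1)
  proof (rule sum.cong[OF refl])
    fix k assume "k \<in> {..<m}"
    then have "g!k \<in> set g" "g!(Suc k mod m) \<in> set g" using gin nxm by auto
    then show "of_bool (Up (g!k) (g!(Suc k mod m)) (a'+1) b') + of_bool (Up (g!(Suc k mod m)) (g!k) (a'+1) b')
      = of_bool (Dn (g!(Suc k mod m)) (g!k) a' b') + (of_bool (Dn (g!k) (g!(Suc k mod m)) a' b') :: nat)"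
      using t[of "g!k" "g!(Suc k mod m)"] t[of "g!(Suc k mod m)" "g!k"] by simp
  qed
  have "cr g a' b' + cr g (a'+1) b' = (\<Sum>k<m. phi (g!k) (g!(Suc k mod m)) + phi (g!(Suc k mod m)) (g!k))"
    unfolding cr2 unfolding cr_def m(1) phi_def sum.distrib[symmetric] by (rule sum.cong) auto
  also have "\<dots> = (\<Sum>k<m. phi (g!k) (g!(Suc k mod m))) + (\<Sum>k<m. phi (g!(Suc k mod m)) (g!k))"
    by (rule sum.distrib)
  also have "(\<Sum>k<m. phi (g!(Suc k mod m)) (g!k)) = (\<Sum>k<m. phi (g!(Suc k mod m)) (g!((Suc k mod m + m - 1) mod m)))"
  proof (rule sum.cong[OF refl])
    fix k assume "k \<in> {..<m}"
    then have "(Suc k mod m + m - 1) mod m = k" using pv_nx by simp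
    then show "phi (g!(Suc k mod m)) (g!k) = phi (g!(Suc k mod m)) (g!((Suc k mod m + m - 1) mod m))" by simp
  qed
  also have "\<dots> = (\<Sum>k<m. phi (g!k) (g!((k + m - 1) mod m)))"
    using sum_shift[OF m(2), of "\<lambda>j. phi (g!j) (g!((j + m - 1) mod m))"] by simp
  finally have eq: "cr g a' b' + cr g (a'+1) b' = (\<Sum>k<m. phi (g!k) (g!(Suc k mod m)) + phi (g!k) (g!((k + m - 1) mod m)))"
    by (simp add: sum.distrib)
  have pval: "phi x y = of_bool (\<exists>s. s > b' \<and> x = Some (a', s))" if "Rd N x y" for x y
  proof (cases "\<exists>s. s > b' \<and> x = Some (a', s)")
    case True
    then obtain s' where s': "s' > b'" "x = Some (a',s')" by blast
    show ?thesis
    proof (cases y)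
      case None
      then have "(a',s') \<in> corners N" using that s' by simp
      then have "a' = 0" using a0 unfolding corners_def by auto
      then show ?thesis using s' None unfolding phi_def Up_def Dn_def by auto
    next
      case (Some q)
      then have d: "diag (a',s') q" using that s' by simp
      obtain q1 q2 where q: "q = (q1,q2)" by (cases q)
      have "\<bar>a' - q1\<bar> = 1" "\<bar>s' - q2\<bar> = 1" using d q unfolding diag_def by auto
      then have "(q1 = a' - 1 \<or> q1 = a' + 1) \<and> (q2 = s' - 1 \<or> q2 = s' + 1)" by linarith
      then show ?thesis using s' Some q unfolding phi_def Up_def Dn_def by auto
    qed
  next
    case False
    then show ?thesis unfolding phi_def Up_def Dn_def by auto
  qed
  have "even (phi (g!k) (g!(Suc k mod m)) + phi (g!k) (g!((k + m - 1) mod m)))" if "k < m" for k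
  proof -
    have r1: "Rd N (g!k) (g!(Suc k mod m))" using wk that by blast
    have "Rd N (g!((k + m - 1) mod m)) (g!(Suc ((k + m - 1) mod m) mod m))" using wk pvm that by blast
    then have "Rd N (g!((k + m - 1) mod m)) (g!k)" using nx_pv[OF that] by simp
    then have r2: "Rd N (g!k) (g!((k + m - 1) mod m))" by (rule Rd_sym)
    show ?thesis using pval[OF r1] pval[OF r2] by simp
  qed
  then show ?thesis unfolding eq by (intro dvd_sum) auto
qed

lemma parity_step:
  assumes "adj_in B p q"
  shows "even (cr g (fst p) (snd p)) = even (cr g (fst q) (snd q))"
proof -
  have pq: "p \<in> B" "q \<in> B" "adj p q" using assms unfolding adj_in_def by auto
  consider "q = (fst p + 1, snd p)" | "q = (fst p - 1, snd p)" | "q = (fst p, snd p + 1)" | "q = (fst p, snd p - 1)"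
    using adj_cases[OF pq(3)] by blast
  then show ?thesis
  proof cases
    case 1
    then have "even (cr g (fst p) (snd p) + cr g (fst p + 1) (snd p))" using V[of "fst p" "snd p"] pq by simp
    then show ?thesis using 1 by simp
  next
    case 2
    then have p': "p = (fst q + 1, snd q)" by simp
    then have "even (cr g (fst q) (snd q) + cr g (fst q + 1) (snd q))" using V[of "fst q" "snd q"] pq by simp
    then show ?thesis using p' by (metis fst_conv snd_conv even_add)
  next
    case 3
    then show ?thesis using H[of "fst p" "snd p"] pq by simp
  next
    case 4
    then have p': "p = (fst q, snd q + 1)" by simp
    then have "cr g (fst q) (snd q) = cr g (fst q) (snd q + 1)" using H[of "fst q" "snd q"] pq by simp
    then show ?thesis using p' by (metis fst_conv snd_conv)
  qed
qed

lemma parity_path: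
  assumes "(adj_in B)\<^sup>*\<^sup>* p q"
  shows "even (cr g (fst p) (snd p)) = even (cr g (fst q) (snd q))"
  using assms
proof (induction rule: rtranclp_induct)
  case base then show ?case by simp
next
  case (step y z) then show ?case using parity_step[OF step(2)] by simp
qed

lemma SL:
  assumes k0: "k0 < m" "g!k0 = Some (a,s)" "(a,s) \<in> inner N"
    and uniq: "\<forall>k<m. g!k = Some (a,s) \<longrightarrow> k = k0"
    and one: "of_bool (g!(Suc k0 mod m) = Some (a-1,s-1) \<or> g!(Suc k0 mod m) = Some (a-1,s+1))
            + of_bool (g!((k0 + m - 1) mod m) = Some (a-1,s-1) \<or> g!((k0 + m - 1) mod m) = Some (a-1,s+1)) = (1::nat)"
  shows False
proof -
  have sB1: "(a, s-1) \<in> B" "(a, s+1) \<in> B"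
    using iso[OF k0(3) notB[OF k0(1,2)]] unfolding adj_def by auto
  have a1: "a \<ge> 1" using k0(3) unfolding inner_def by auto
  define UpN where "UpN = (\<lambda>y. y = Some (a-1,s-1) \<or> y = Some (a-1,s+1))"
  have t: "of_bool (Up x y a (s-1)) = of_bool (Up x y a (s+1)) + (of_bool (x = Some (a,s) \<and> UpN y) :: nat)"
    if "x \<in> set g" for x y
  proof -
    have nx: "x \<noteq> Some (a, s+1)" using notB'[OF that] sB1 by auto
    have "Up x y a (s-1) \<longleftrightarrow> Up x y a (s+1) \<or> (x = Some (a,s) \<and> UpN y)"
    proof
      assume "Up x y a (s-1)"
      then obtain s' where s': "s' > s - 1" "x = Some (a,s')" "(y = Some (a-1,s'-1) \<or> y = Some (a-1,s'+1) \<or> (a = 0 \<and> y = None))"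
        unfolding Up_def by blast
      show "Up x y a (s+1) \<or> (x = Some (a,s) \<and> UpN y)"
      proof (cases "s' = s")
        case True then show ?thesis using s' a1 unfolding UpN_def by auto
      next
        case False
        then have "s' \<noteq> s + 1" using s'(2) nx by auto
        then have "s' > s + 1" using False s'(1) by simp
        then show ?thesis using s'(2,3) unfolding Up_def by blast
      qed
    next
      assume "Up x y a (s+1) \<or> (x = Some (a,s) \<and> UpN y)"
      then show "Up x y a (s-1)"
      proof
        assume "Up x y a (s+1)"
        then obtain s' where s': "s' > s + 1" "x = Some (a,s')" "(y = Some (a-1,s'-1) \<or> y = Some (a-1,s'+1) \<or> (a = 0 \<and> y = None))"
          unfolding Up_def by blast
        then have "s' > s - 1" by simp
        then show ?thesis using s'(2,3) unfolding Up_def by blast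
      next
        assume "x = Some (a,s) \<and> UpN y"
        then show ?thesis unfolding Up_def UpN_def by force
      qed
    qed
    moreover have "\<not> (Up x y a (s+1) \<and> (x = Some (a,s) \<and> UpN y))" unfolding Up_def by auto
    ultimately show ?thesis by auto
  qed
  define X where "X = (\<lambda>k. of_bool (Up (g!k) (g!(Suc k mod m)) a (s+1)) :: nat)"
  define Y where "Y = (\<lambda>k. of_bool (Up (g!(Suc k mod m)) (g!k) a (s+1)) :: nat)"
  define P where "P = (\<lambda>k. of_bool (g!k = Some (a,s) \<and> UpN (g!(Suc k mod m))) :: nat)"
  define Q where "Q = (\<lambda>k. of_bool (g!(Suc k mod m) = Some (a,s) \<and> UpN (g!k)) :: nat)"
  have e1: "cr g a (s-1) = (\<Sum>k<m. (X k + Y k) + (P k + Q k))"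
    unfolding cr_def m(1)
  proof (rule sum.cong[OF refl])
    fix k assume "k \<in> {..<m}"
    then have "g!k \<in> set g" "g!(Suc k mod m) \<in> set g" using gin nxm by auto
    then show "of_bool (Up (g!k) (g!(Suc k mod m)) a (s-1)) + of_bool (Up (g!(Suc k mod m)) (g!k) a (s-1)) =
      (X k + Y k) + (P k + Q k)"
      unfolding X_def Y_def P_def Q_def
      using t[of "g!k" "g!(Suc k mod m)"] t[of "g!(Suc k mod m)" "g!k"] by simp
  qed
  have e2: "(\<Sum>k<m. (X k + Y k) + (P k + Q k)) = (\<Sum>k<m. X k + Y k) + ((\<Sum>k<m. P k) + (\<Sum>k<m. Q k))"
    by (rule sum4[of X Y P Q m])
  have e3: "(\<Sum>k<m. X k + Y k) = cr g a (s+1)" unfolding cr_def m(1) X_def Y_def by (rule refl)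
  have e4: "(\<Sum>k<m. P k) = (\<Sum>k<m. if k = k0 then of_bool (UpN (g!(Suc k0 mod m))) else 0)"
  proof (rule sum.cong[OF refl])
    fix k assume k: "k \<in> {..<m}"
    show "P k = (if k = k0 then of_bool (UpN (g!(Suc k0 mod m))) else 0)"
    proof (cases "k = k0")
      case True then show ?thesis unfolding P_def using k0(2) by simp
    next
      case False
      then have "g!k \<noteq> Some (a,s)" using uniq k by auto
      then show ?thesis unfolding P_def using False by simp
    qed
  qed
  also have "\<dots> = of_bool (UpN (g!(Suc k0 mod m)))" using k0(1) by simp
  finally have e4': "(\<Sum>k<m. P k) = of_bool (UpN (g!(Suc k0 mod m)))" .
  have e5: "(\<Sum>k<m. Q k) = (\<Sum>k<m. if k = (k0 + m - 1) mod m then of_bool (UpN (g!((k0 + m - 1) mod m))) else 0)"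
    unfolding Q_def
  proof (rule sum.cong[OF refl])
    fix k assume k: "k \<in> {..<m}"
    have "g!(Suc k mod m) = Some (a,s) \<longleftrightarrow> k = (k0 + m - 1) mod m"
    proof
      assume "g!(Suc k mod m) = Some (a,s)"
      then have "Suc k mod m = k0" using uniq nxm k by auto
      then show "k = (k0 + m - 1) mod m" using pv_nx[of k m] k by auto
    next
      assume "k = (k0 + m - 1) mod m"
      then show "g!(Suc k mod m) = Some (a,s)" using nx_pv[OF k0(1)] k0(2) by simp
    qed
    then show "of_bool (g!(Suc k mod m) = Some (a,s) \<and> UpN (g!k)) = (if k = (k0 + m - 1) mod m then of_bool (UpN (g!((k0 + m - 1) mod m))) else 0)"
      by auto
  qed
  also have "\<dots> = of_bool (UpN (g!((k0 + m - 1) mod m)))" using pvm[OF k0(1)] by simp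
  finally have e5': "(\<Sum>k<m. Q k) = of_bool (UpN (g!((k0 + m - 1) mod m)))" .
  have W: "cr g a (s-1) = cr g a (s+1) + 1" using e1 e2 e3 e4' e5' one unfolding UpN_def by simp
  have "(adj_in B)\<^sup>*\<^sup>* (a, s-1) (a, s+1)" using conn sB1 unfolding connected_cells_def by blast
  then have "even (cr g a (s-1)) = even (cr g a (s+1))" using parity_path by fastforce
  then show False using W by simp
qed

end


lemma idx_inj:
  fixes k j l m :: nat
  assumes "j < m" "l < m" "(k + j) mod m = (k + l) mod m"
  shows "j = l"
proof (rule ccontr)
  assume ne: "j \<noteq> l"
  have gen: "\<And>j l. j < m \<Longrightarrow> l < m \<Longrightarrow> j < l \<Longrightarrow> (k + j) mod m \<noteq> (k + l) mod m"
  proof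
    fix j l assume h: "j < m" "l < m" "j < l" "(k + j) mod m = (k + l) mod m"
    then have "m dvd (k + l) - (k + j)" using mod_eq_dvd_iff_nat[of "k+j" "k+l" m] by simp
    then have "m dvd l - j" by simp
    moreover have "0 < l - j" "l - j < m" using h by auto
    ultimately show False using nat_dvd_not_less by blast
  qed
  show False
  proof (cases "j < l")
    case True then show False using gen[of j l] assms by blast
  next
    case False then have "l < j" using ne by simp
    then show False using gen[of l j] assms by metis
  qed
qed

lemma Suc_mod_eq: "Suc k mod m = (k + 1) mod m" by simp
lemma Suc_mod_mod: "Suc (x mod m) mod m = (x + 1) mod m" by (simp add: mod_Suc_eq)

context core begin

lemma Z_box: "p \<in> Z \<Longrightarrow> p \<in> box N \<and> p \<notin> B" unfolding Z_def by auto

lemma n4: "int N - 1 \<ge> 4" using N5 by simp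

lemma Z_rowedge_corner: "p \<in> Z \<Longrightarrow> fst p = 0 \<or> fst p = int N - 1 \<Longrightarrow> p \<in> corners N"
proof -
  assume p: "p \<in> Z" "fst p = 0 \<or> fst p = int N - 1"
  have "p \<notin> inner N" using p(2) n4 unfolding inner_def by auto
  then show "p \<in> corners N" using p(1) ring unfolding Z_def by blast
qed

lemma Z_coledge_corner: "p \<in> Z \<Longrightarrow> snd p = 0 \<or> snd p = int N - 1 \<Longrightarrow> p \<in> corners N"
proof -
  assume p: "p \<in> Z" "snd p = 0 \<or> snd p = int N - 1"
  have "p \<notin> inner N" using p(2) n4 unfolding inner_def by auto
  then show "p \<in> corners N" using p(1) ring unfolding Z_def by blast
qed

lemma corner_diag_unique:
  assumes "c1 \<in> corners N" "c2 \<in> corners N" "diag c1 q" "diag c2 q"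
  shows "c1 = c2"
proof -
  have "\<bar>fst c1 - fst c2\<bar> \<le> 2" "\<bar>snd c1 - snd c2\<bar> \<le> 2" using assms(3,4) unfolding diag_def by auto
  then show ?thesis using assms(1,2) n4 unfolding corners_def by auto
qed

lemma walk_intro:
  assumes "length g = m" "m > 0" "set g \<subseteq> V'" "\<forall>k<m. Rd N (g!k) (g!(Suc k mod m))"
  shows "walk B N g m"
  unfolding walk_def walk_axioms_def using core_axioms assms by blast

lemma D_acyclic: "\<not> gcyc (Rd N) V'"
proof
  assume "gcyc (Rd N) V'"
  then obtain xs where len: "length xs \<ge> 3" and dist: "distinct xs" and st: "set xs \<subseteq> V'"
    and cons: "\<forall>i < length xs - 1. Rd N (xs ! i) (xs ! Suc i)" and lh: "Rd N (last xs) (hd xs)"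
    unfolding gcyc_def by blast
  define m where "m = length xs"
  have m3: "m \<ge> 3" using len m_def by simp
  have wk: "\<forall>k<m. Rd N (xs!k) (xs!(Suc k mod m))"
  proof (intro allI impI)
    fix k assume k: "k < m"
    show "Rd N (xs!k) (xs!(Suc k mod m))"
    proof (cases "Suc k = m")
      case True
      then have "xs!k = last xs" using m_def by (metis diff_Suc_1 last_conv_nth list.size(3) m3 not_numeral_le_zero)
      moreover have "xs!(Suc k mod m) = hd xs"
      proof -
        have "xs \<noteq> []" using m3 m_def by auto
        then show ?thesis using True by (simp add: hd_conv_nth)
      qed
      ultimately show ?thesis using lh by simp
    next
      case False
      then have "Suc k < m" using k by simp
      then show ?thesis using cons m_def by simp
    qed
  qed
  interpret W: walk B N xs m using walk_intro[OF m_def[symmetric] _ st wk] m3 by simp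
  have inV: "\<And>k. k < m \<Longrightarrow> xs!k \<in> V'" using st m_def by (metis nth_mem subsetD)
  have inZ: "\<And>k p. k < m \<Longrightarrow> xs!k = Some p \<Longrightarrow> p \<in> Z"
    using inV unfolding V'_def by fastforce
  have uniqk: "\<And>k k'. k < m \<Longrightarrow> k' < m \<Longrightarrow> xs!k = xs!k' \<Longrightarrow> k = k'"
    using dist m_def by (simp add: nth_eq_iff_index_eq)
  have rd_pv: "\<And>k. k < m \<Longrightarrow> Rd N (xs!((k + m - 1) mod m)) (xs!k)"
    using wk W.pvm nx_pv by metis
  show False
  proof (cases "None \<in> set xs")
    case False
    define col where "col = (\<lambda>k. snd (the (xs!k)))"
    have "0 \<in> {..<m}" using m3 by simp
    then have fin: "finite (col ` {..<m})" "col ` {..<m} \<noteq> {}" by auto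
    obtain k0 where k0: "k0 < m" "col k0 = Max (col ` {..<m})"
      using Max_in[OF fin] by auto
    have kmax: "\<And>k. k < m \<Longrightarrow> col k \<le> col k0" using k0 fin by simp
    have isS: "\<And>k. k < m \<Longrightarrow> \<exists>p. xs!k = Some p"
      using False m_def by (metis nth_mem option.exhaust)
    obtain a s where v: "xs!k0 = Some (a,s)" using isS[OF k0(1)] by auto
    define i1 where "i1 = Suc k0 mod m"
    define i0 where "i0 = (k0 + m - 1) mod m"
    have i1m: "i1 < m" and i0m: "i0 < m" using k0 m3 unfolding i1_def i0_def by auto
    obtain p2 where p2: "xs!i1 = Some p2" using isS[OF i1m] by auto
    obtain p1 where p1: "xs!i0 = Some p1" using isS[OF i0m] by auto
    have d2: "diag (a,s) p2" using wk k0(1) v p2 unfolding i1_def by fastforce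
    have d1: "diag p1 (a,s)" using rd_pv[OF k0(1)] v p1 unfolding i0_def by simp
    have c2: "snd p2 \<le> s" using kmax[OF i1m] p2 v unfolding col_def by simp
    have c1: "snd p1 \<le> s" using kmax[OF i0m] p1 v unfolding col_def by simp
    have s2: "snd p2 = s - 1" using d2 c2 unfolding diag_def by auto
    have s1: "snd p1 = s - 1" using d1 c1 unfolding diag_def by auto
    have "i0 \<noteq> i1"
    proof
      assume "i0 = i1"
      then have "(k0 + (m - 1)) mod m = (k0 + 1) mod m" unfolding i0_def i1_def using m3 by simp
      then have "m - 1 = 1" using idx_inj[of "m-1" m 1 k0] m3 by simp
      then show False using m3 by simp
    qed
    then have "p1 \<noteq> p2" using uniqk[OF i0m i1m] p1 p2 by auto
    then have r12: "fst p1 \<noteq> fst p2" using s1 s2 by (metis prod.collapse)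
    have r1: "fst p1 = a - 1 \<or> fst p1 = a + 1" using d1 unfolding diag_def by auto
    have r2: "fst p2 = a - 1 \<or> fst p2 = a + 1" using d2 unfolding diag_def by auto
    have bx: "p1 \<in> box N" "p2 \<in> box N" using inZ[OF i0m p1] inZ[OF i1m p2] Z_box by auto
    then have a_rng: "1 \<le> a" "a \<le> int N - 2" using r1 r2 r12 unfolding box_def by auto
    have vZ: "(a,s) \<in> Z" using inZ[OF k0(1) v] .
    have vin: "(a,s) \<in> inner N"
    proof -
      have nc: "(a,s) \<notin> corners N" using a_rng n4 unfolding corners_def by auto
      have "s \<noteq> 0 \<and> s \<noteq> int N - 1" using Z_coledge_corner[OF vZ] nc by auto
      moreover have "0 \<le> s" "s \<le> int N - 1" using vZ Z_box unfolding box_def by auto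
      ultimately show ?thesis using a_rng unfolding inner_def by auto
    qed
    have uniq: "\<forall>k<m. xs!k = Some (a,s) \<longrightarrow> k = k0" using uniqk k0(1) v by metis
    have one: "of_bool (xs!(Suc k0 mod m) = Some (a-1,s-1) \<or> xs!(Suc k0 mod m) = Some (a-1,s+1))
            + of_bool (xs!((k0 + m - 1) mod m) = Some (a-1,s-1) \<or> xs!((k0 + m - 1) mod m) = Some (a-1,s+1)) = (1::nat)"
    proof -
      have e2: "(xs!i1 = Some (a-1,s-1) \<or> xs!i1 = Some (a-1,s+1)) \<longleftrightarrow> fst p2 = a - 1"
        using p2 s2 by (cases p2) auto
      have e1: "(xs!i0 = Some (a-1,s-1) \<or> xs!i0 = Some (a-1,s+1)) \<longleftrightarrow> fst p1 = a - 1"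
        using p1 s1 by (cases p1) auto
      show ?thesis unfolding i1_def[symmetric] i0_def[symmetric] e1 e2 using r1 r2 r12 by auto
    qed
    show False using W.SL[OF k0(1) v vin uniq one] .
  next
    case True
    then obtain k0 where k0: "k0 < m" "xs!k0 = None" using m_def by (metis in_set_conv_nth)
    define i1 where "i1 = (k0 + 1) mod m"
    define i2 where "i2 = (k0 + 2) mod m"
    define i3 where "i3 = (k0 + 3) mod m"
    define i0 where "i0 = (k0 + (m - 1)) mod m"
    have im: "i1 < m" "i2 < m" "i3 < m" "i0 < m" using m3 unfolding i1_def i2_def i3_def i0_def by auto
    have nx1: "Suc k0 mod m = i1" unfolding i1_def by simp
    have nx2: "Suc i1 mod m = i2" unfolding i1_def i2_def by (simp add: Suc_mod_mod eval_nat_numeral)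
    have nx3: "Suc i2 mod m = i3" unfolding i2_def i3_def by (simp add: Suc_mod_mod eval_nat_numeral)
    have pv2: "(i2 + m - 1) mod m = i1"
    proof -
      have "(i2 + m - 1) mod m = (Suc i1 mod m + m - 1) mod m" using nx2 by simp
      also have "\<dots> = i1" using pv_nx im(1) by blast
      finally show ?thesis .
    qed
    have pv0: "(k0 + m - 1) mod m = i0" unfolding i0_def using m3 by simp
    have ne: "k0 \<noteq> i2" "i1 \<noteq> i3" "i0 \<noteq> i1"
    proof -
      have "k0 mod m \<noteq> i2"
      proof
        assume "k0 mod m = i2"
        then have "(k0 + 0) mod m = (k0 + 2) mod m" unfolding i2_def by simp
        then show False using idx_inj[of 0 m 2 k0] m3 by simp
      qed
      then show "k0 \<noteq> i2" using k0 by simp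
      show "i1 \<noteq> i3"
      proof
        assume "i1 = i3"
        then have "(k0 + 1 + 0) mod m = (k0 + 1 + 2) mod m" unfolding i1_def i3_def by (simp add: eval_nat_numeral)
        then show False using idx_inj[of 0 m 2 "k0+1"] m3 by simp
      qed
      show "i0 \<noteq> i1"
      proof
        assume "i0 = i1"
        then have "(k0 + (m-1)) mod m = (k0 + 1) mod m" unfolding i1_def i0_def by simp
        then have "m - 1 = 1" using idx_inj[of "m-1" m 1 k0] m3 by simp
        then show False using m3 by simp
      qed
    qed
    obtain \<kappa> where ka: "xs!i1 = Some \<kappa>" "\<kappa> \<in> corners N"
      using wk k0 nx1 by (cases "xs!i1") fastforce+
    have kaZ: "\<kappa> \<in> Z" using inZ[OF im(1) ka(1)] .
    have "xs!i2 \<noteq> None" using uniqk[OF k0(1) im(2)] k0(2) ne(1) by metis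
    then obtain q where q: "xs!i2 = Some q" by auto
    have dq: "diag \<kappa> q" using wk im(1) nx2 ka q by fastforce
    have qZ: "q \<in> Z" using inZ[OF im(2) q] .
    obtain a s where qas: "q = (a,s)" by (cases q)
    have qb: "q \<in> box N" using qZ Z_box by auto
    have qrow: "(fst \<kappa> = 0 \<and> a = 1) \<or> (fst \<kappa> = int N - 1 \<and> a = int N - 2)"
      using ka(2) dq qb qas n4 unfolding corners_def diag_def box_def by auto
    have qcol: "s = 1 \<or> s = int N - 2"
      using ka(2) dq qb qas n4 unfolding corners_def diag_def box_def by auto
    have qin: "q \<in> inner N" using qrow qcol qas n4 unfolding inner_def by auto
    have qnc: "q \<notin> corners N" using qin n4 unfolding inner_def corners_def by auto
    obtain \<kappa>' where ka': "xs!i0 = Some \<kappa>'" "\<kappa>' \<in> corners N"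
      using rd_pv[OF k0(1)] k0(2) pv0 by (cases "xs!i0") fastforce+
    have "i2 \<noteq> i0" using ka' q qnc by auto
    have m4: "m \<ge> 4"
    proof (rule ccontr)
      assume "\<not> m \<ge> 4"
      then have "m = 3" using m3 by simp
      then have "i2 = i0" unfolding i2_def i0_def by simp
      then show False using \<open>i2 \<noteq> i0\<close> by simp
    qed
    have "k0 \<noteq> i3"
    proof -
      have "k0 mod m \<noteq> i3"
      proof
        assume "k0 mod m = i3"
        then have "(k0 + 0) mod m = (k0 + 3) mod m" unfolding i3_def by simp
        then show False using idx_inj[of 0 m 3 k0] m4 by simp
      qed
      then show ?thesis using k0 by simp
    qed
    then have "xs!i3 \<noteq> None" using uniqk[OF k0(1) im(3)] k0(2) by metis
    then obtain u where u: "xs!i3 = Some u" by auto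
    have du: "diag q u" using wk im(2) nx3 q u by fastforce
    have uZ: "u \<in> Z" using inZ[OF im(3) u] .
    have uk: "u \<noteq> \<kappa>" using uniqk[OF im(1) im(3)] ne(2) ka u by auto
    have ur: "fst u \<noteq> 0 \<and> fst u \<noteq> int N - 1"
    proof (rule ccontr)
      assume "\<not> (fst u \<noteq> 0 \<and> fst u \<noteq> int N - 1)"
      then have "u \<in> corners N" using Z_rowedge_corner[OF uZ] by auto
      then have "u = \<kappa>" using corner_diag_unique[OF _ ka(2) diag_sym[OF du] dq] by simp
      then show False using uk by simp
    qed
    have urow: "fst u = a - 1 \<or> fst u = a + 1" "snd u = s - 1 \<or> snd u = s + 1"
      using du qas unfolding diag_def by auto
    have krow: "snd \<kappa> = s - 1 \<or> snd \<kappa> = s + 1" using dq qas unfolding diag_def by auto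
    have uniq: "\<forall>k<m. xs!k = Some (a,s) \<longrightarrow> k = i2" using uniqk im(2) q qas by metis
    have one: "of_bool (xs!(Suc i2 mod m) = Some (a-1,s-1) \<or> xs!(Suc i2 mod m) = Some (a-1,s+1))
            + of_bool (xs!((i2 + m - 1) mod m) = Some (a-1,s-1) \<or> xs!((i2 + m - 1) mod m) = Some (a-1,s+1)) = (1::nat)"
    proof -
      have e1: "(xs!i3 = Some (a-1,s-1) \<or> xs!i3 = Some (a-1,s+1)) \<longleftrightarrow> fst u = a - 1"
        using u urow(2) by (cases u) auto
      have e2: "(xs!i1 = Some (a-1,s-1) \<or> xs!i1 = Some (a-1,s+1)) \<longleftrightarrow> fst \<kappa> = a - 1"
        using ka(1) krow by (cases \<kappa>) auto
      have "of_bool (fst u = a - 1) + of_bool (fst \<kappa> = a - 1) = (1::nat)"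
        using qrow urow(1) ur by auto
      then show ?thesis unfolding nx3 pv2 e1 e2 .
    qed
    show False using W.SL[OF im(2) q[unfolded qas] qin[unfolded qas] uniq one] .
  qed
qed

end


definition cellsOf :: "cell \<Rightarrow> cell set" where
  "cellsOf b = {b, (fst b, snd b + 1), (fst b + 1, snd b), (fst b + 1, snd b + 1)}"

lemma card_ind: "finite A \<Longrightarrow> (\<Sum>p\<in>A. (if p \<in> X then 1 else 0 :: nat)) = card (A \<inter> X)"
proof -
  assume f: "finite A"
  have "(\<Sum>p\<in>A. (if p \<in> X then 1 else 0 :: nat)) = (\<Sum>p\<in>{p\<in>A. p \<in> X}. 1)"
    using sum.inter_filter[OF f, of "\<lambda>_. 1::nat" "\<lambda>p. p \<in> X"] by simp
  also have "\<dots> = card {p\<in>A. p \<in> X}" by simp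
  also have "{p\<in>A. p \<in> X} = A \<inter> X" by auto
  finally show ?thesis .
qed

context core begin

definition "BL = {0..int N - 2} \<times> {0..int N - 2}"
definition "Dg = {(p,q). p \<in> Z \<and> q \<in> Z \<and> diag p q}"
definition "DgB b = {(p,q). (p,q) \<in> Dg \<and> p \<in> cellsOf b \<and> q \<in> cellsOf b}"

lemma finZ: "finite Z" unfolding Z_def box_def by simp
lemma finBL: "finite BL" unfolding BL_def by simp

lemma Z_sub: "Z \<subseteq> inner N \<union> corners N" using ring unfolding Z_def by blast
lemma inner_box: "inner N \<subseteq> box N" unfolding inner_def box_def by auto
lemma corners_box: "corners N \<subseteq> box N" using n4 unfolding corners_def box_def by auto

lemma Z_eq: "Z = (inner N - B) \<union> (corners N - B)"
  using Z_sub inner_box corners_box unfolding Z_def by blast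
lemma inner_corners_disj: "inner N \<inter> corners N = {}"
  using n4 unfolding inner_def corners_def by auto

lemma card_Z: "card Z = card (inner N - B) + card (corners N - B)"
  unfolding Z_eq
  by (rule card_Un_disjoint) (use inner_corners_disj in \<open>auto simp: inner_def corners_def\<close>)

lemma Z_indep: "p \<in> Z \<Longrightarrow> q \<in> Z \<Longrightarrow> \<not> adj p q"
proof
  assume p: "p \<in> Z" and q: "q \<in> Z" and a: "adj p q"
  have pB: "p \<notin> B" "q \<notin> B" using p q unfolding Z_def by auto
  show False
  proof (cases "p \<in> inner N")
    case True then show False using iso[OF True pB(1) a] pB(2) by simp
  next
    case False
    show False
    proof (cases "q \<in> inner N")
      case True then show False using iso[OF True pB(2) adj_sym[OF a]] pB(1) by simp
    next
      case False
      then have "p \<in> corners N" "q \<in> corners N" using \<open>p \<notin> inner N\<close> Z_sub p q by auto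
      then show False using a n4 unfolding corners_def adj_def by auto
    qed
  qed
qed

lemma block_has_Z:
  assumes b: "b \<in> BL"
  shows "Z \<inter> cellsOf b \<noteq> {}"
proof
  assume e: "Z \<inter> cellsOf b = {}"
  obtain x y where xy: "b = (x,y)" by (cases b)
  have bx: "cellsOf b \<subseteq> box N" using b xy unfolding BL_def box_def cellsOf_def by auto
  have inB: "cellsOf b \<subseteq> B" using e bx unfolding Z_def by blast
  define xs where "xs = [(x,y), (x,y+1), (x+1,y+1), (x+1,y)]"
  have "has_cycle B"
    unfolding has_cycle_def
  proof (intro exI conjI)
    show "3 \<le> length xs" unfolding xs_def by simp
    show "distinct xs" unfolding xs_def by simp
    show "set xs \<subseteq> B" using inB xy unfolding xs_def cellsOf_def by auto
    show "\<forall>i<length xs - 1. adj (xs ! i) (xs ! Suc i)"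
    proof (intro allI impI)
      fix i assume "i < length xs - 1"
      then have "i = 0 \<or> i = 1 \<or> i = 2" unfolding xs_def by auto
      then show "adj (xs ! i) (xs ! Suc i)" unfolding xs_def adj_def by auto
    qed
    show "adj (last xs) (hd xs)" unfolding xs_def adj_def by simp
  qed
  then show False using acyc by simp
qed

lemma block_struct:
  assumes "b = (x,y)"
  shows "Z \<inter> cellsOf b \<subseteq> {(x,y),(x+1,y+1)} \<or> Z \<inter> cellsOf b \<subseteq> {(x,y+1),(x+1,y)}"
proof -
  have na: "\<And>p q. p \<in> Z \<Longrightarrow> q \<in> Z \<Longrightarrow> adj p q \<Longrightarrow> False" using Z_indep by blast
  have a1: "adj (x,y) (x,y+1)" "adj (x,y) (x+1,y)" "adj (x+1,y+1) (x,y+1)" "adj (x+1,y+1) (x+1,y)"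
    unfolding adj_def by auto
  show ?thesis
  proof (cases "(x,y) \<in> Z \<or> (x+1,y+1) \<in> Z")
    case True
    then have "(x,y+1) \<notin> Z" "(x+1,y) \<notin> Z" using na a1 by blast+
    then show ?thesis using assms unfolding cellsOf_def by auto
  next
    case False
    then show ?thesis using assms unfolding cellsOf_def by auto
  qed
qed

lemma card_cells_le: "b \<in> BL \<Longrightarrow> card (DgB b) + 2 \<ge> 2 * card (Z \<inter> cellsOf b)"
proof -
  assume bBL: "b \<in> BL"
  obtain x y where b: "b = (x,y)" by (cases b)
  have d1: "diag (x,y) (x+1,y+1)" "diag (x+1,y+1) (x,y)" "diag (x,y+1) (x+1,y)" "diag (x+1,y) (x,y+1)"
    unfolding diag_def by auto
  have c: "(x,y) \<in> cellsOf b" "(x+1,y+1) \<in> cellsOf b" "(x,y+1) \<in> cellsOf b" "(x+1,y) \<in> cellsOf b"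
    using b unfolding cellsOf_def by auto
  have fD: "finite (DgB b)"
    by (rule finite_subset[of _ "cellsOf b \<times> cellsOf b"]) (auto simp: DgB_def cellsOf_def)
  consider (A) "Z \<inter> cellsOf b \<subseteq> {(x,y),(x+1,y+1)}" | (B) "Z \<inter> cellsOf b \<subseteq> {(x,y+1),(x+1,y)}"
    using block_struct[OF b] by blast
  then show ?thesis
  proof cases
    case A
    show ?thesis
    proof (cases "Z \<inter> cellsOf b = {(x,y),(x+1,y+1)}")
      case True
      then have "{((x,y),(x+1,y+1)), ((x+1,y+1),(x,y))} \<subseteq> DgB b"
        unfolding DgB_def Dg_def using d1 c by auto
      then have "card {((x,y),(x+1,y+1)), ((x+1,y+1),(x,y))} \<le> card (DgB b)" using fD by (rule card_mono[rotated])
      then have "2 \<le> card (DgB b)" by simp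
      then show ?thesis using True by simp
    next
      case False
      then have "Z \<inter> cellsOf b \<subset> {(x,y),(x+1,y+1)}" using A by blast
      then have "card (Z \<inter> cellsOf b) < card {(x,y),(x+1,y+1)}" by (rule psubset_card_mono[rotated]) simp
      then have "card (Z \<inter> cellsOf b) \<le> 1" by simp
      then show ?thesis by simp
    qed
  next
    case B
    show ?thesis
    proof (cases "Z \<inter> cellsOf b = {(x,y+1),(x+1,y)}")
      case True
      then have "{((x,y+1),(x+1,y)), ((x+1,y),(x,y+1))} \<subseteq> DgB b"
        unfolding DgB_def Dg_def using d1 c by auto
      then have "card {((x,y+1),(x+1,y)), ((x+1,y),(x,y+1))} \<le> card (DgB b)" using fD by (rule card_mono[rotated])
      then have "2 \<le> card (DgB b)" by simp
      then show ?thesis using True by simp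
    next
      case False
      then have "Z \<inter> cellsOf b \<subset> {(x,y+1),(x+1,y)}" using B by blast
      then have "card (Z \<inter> cellsOf b) < card {(x,y+1),(x+1,y)}" by (rule psubset_card_mono[rotated]) simp
      then have "card (Z \<inter> cellsOf b) \<le> 1" by simp
      then show ?thesis by simp
    qed
  qed
qed

lemma DgB_block: "(p,q) \<in> DgB b \<Longrightarrow> b = (min (fst p) (fst q), min (snd p) (snd q))"
proof -
  assume h: "(p,q) \<in> DgB b"
  then have "diag p q" "p \<in> cellsOf b" "q \<in> cellsOf b" unfolding DgB_def Dg_def by auto
  then show ?thesis unfolding diag_def cellsOf_def by (cases b) auto
qed

lemma card_Dg_ge: "card Dg \<ge> (\<Sum>b\<in>BL. card (DgB b))"
proof -
  have fDg: "finite Dg" by (rule finite_subset[of _ "Z \<times> Z"]) (auto simp: Dg_def finZ)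
  have "card (\<Union>(DgB ` BL)) = (\<Sum>b\<in>BL. card (DgB b))"
  proof (rule card_UN_disjoint[OF finBL])
    show "\<forall>i\<in>BL. finite (DgB i)" using fDg unfolding DgB_def
      by (auto intro: finite_subset[of _ Dg] simp: Dg_def)
    show "\<forall>i\<in>BL. \<forall>j\<in>BL. i \<noteq> j \<longrightarrow> DgB i \<inter> DgB j = {}"
    proof (intro ballI impI)
      fix i j :: cell assume "i \<noteq> j"
      show "DgB i \<inter> DgB j = {}"
      proof (rule ccontr)
        assume "DgB i \<inter> DgB j \<noteq> {}"
        then obtain p q where "(p,q) \<in> DgB i" "(p,q) \<in> DgB j" by auto
        then have "i = j" using DgB_block by metis
        then show False using \<open>i \<noteq> j\<close> by simp
      qed
    qed
  qed
  moreover have "\<Union>(DgB ` BL) \<subseteq> Dg" unfolding DgB_def by auto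
  ultimately show ?thesis using card_mono[OF fDg] by metis
qed

lemma blocks_of_cell:
  assumes "p \<in> Z"
  shows "card {b\<in>BL. p \<in> cellsOf b} \<ge> (if p \<in> inner N then 4 else 1)"
proof -
  have fin: "finite {b\<in>BL. p \<in> cellsOf b}" using finBL by simp
  obtain i j where p: "p = (i,j)" by (cases p)
  show ?thesis
  proof (cases "p \<in> inner N")
    case True
    then have r: "1 \<le> i" "i \<le> int N - 2" "1 \<le> j" "j \<le> int N - 2" using p unfolding inner_def by auto
    have "{(i-1,j-1),(i-1,j),(i,j-1),(i,j)} \<subseteq> {b\<in>BL. p \<in> cellsOf b}"
      using r p unfolding BL_def cellsOf_def by auto
    then have "card {(i-1,j-1),(i-1,j),(i,j-1),(i,j)} \<le> card {b\<in>BL. p \<in> cellsOf b}"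
      using fin by (rule card_mono[rotated])
    moreover have "card {(i-1,j-1),(i-1,j),(i,j-1),(i,j)} = 4" by simp
    ultimately show ?thesis using True by simp
  next
    case False
    then have "p \<in> corners N" using assms Z_sub by auto
    then have ij: "(i = 0 \<or> i = int N - 1) \<and> (j = 0 \<or> j = int N - 1)" using p unfolding corners_def by auto
    define b where "b = (min i (int N - 2), min j (int N - 2))"
    have "b \<in> BL" using ij n4 unfolding b_def BL_def by auto
    moreover have "p \<in> cellsOf b" using ij n4 p unfolding b_def cellsOf_def by auto
    ultimately have "\<exists>b\<in>BL. p \<in> cellsOf b" by blast
    then have "{b\<in>BL. p \<in> cellsOf b} \<noteq> {}" by blast
    then have "card {b\<in>BL. p \<in> cellsOf b} \<ge> 1" using fin by (simp add: Suc_le_eq card_gt_0_iff)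
    then show ?thesis using False by simp
  qed
qed

lemma card_BL: "card BL = (N - 1) * (N - 1)"
proof -
  have "card {0..int N - 2} = N - 1" using N5 by simp
  then show ?thesis unfolding BL_def card_cartesian_product by simp
qed

lemma sum_cells: "(\<Sum>b\<in>BL. card (Z \<inter> cellsOf b)) \<ge> 4 * card (inner N - B) + card (corners N - B)"
proof -
  have "(\<Sum>b\<in>BL. card (Z \<inter> cellsOf b)) = (\<Sum>b\<in>BL. \<Sum>p\<in>Z. (if p \<in> cellsOf b then 1 else 0 :: nat))"
    using card_ind[OF finZ] by simp
  also have "\<dots> = (\<Sum>p\<in>Z. \<Sum>b\<in>BL. (if p \<in> cellsOf b then 1 else 0 :: nat))"
    by (rule sum.swap)
  also have "\<dots> = (\<Sum>p\<in>Z. card {b\<in>BL. p \<in> cellsOf b})"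
  proof (rule sum.cong[OF refl])
    fix p
    have "(\<Sum>b\<in>BL. (if p \<in> cellsOf b then 1 else 0 :: nat)) = (\<Sum>b\<in>BL. (if b \<in> {b. p \<in> cellsOf b} then 1 else 0 :: nat))"
      by simp
    also have "\<dots> = card (BL \<inter> {b. p \<in> cellsOf b})" by (rule card_ind[OF finBL])
    also have "BL \<inter> {b. p \<in> cellsOf b} = {b\<in>BL. p \<in> cellsOf b}" by auto
    finally show "(\<Sum>b\<in>BL. (if p \<in> cellsOf b then 1 else 0 :: nat)) = card {b\<in>BL. p \<in> cellsOf b}" .
  qed
  also have "\<dots> \<ge> (\<Sum>p\<in>Z. (if p \<in> inner N then 4 else 1 :: nat))"
    by (rule sum_mono) (rule blocks_of_cell)
  also have "(\<Sum>p\<in>Z. (if p \<in> inner N then 4 else 1 :: nat))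
      = (\<Sum>p\<in>inner N - B. (if p \<in> inner N then 4 else 1 :: nat)) + (\<Sum>p\<in>corners N - B. (if p \<in> inner N then 4 else 1 :: nat))"
    unfolding Z_eq
    by (rule sum.union_disjoint) (use inner_corners_disj in \<open>auto simp: inner_def corners_def\<close>)
  also have "(\<Sum>p\<in>inner N - B. (if p \<in> inner N then 4 else 1 :: nat)) = 4 * card (inner N - B)" by simp
  also have "(\<Sum>p\<in>corners N - B. (if p \<in> inner N then 4 else 1 :: nat)) = (\<Sum>p\<in>corners N - B. 1)"
    by (rule sum.cong[OF refl]) (use inner_corners_disj in auto)
  also have "(\<Sum>p\<in>corners N - B. (1::nat)) = card (corners N - B)" by simp
  finally show ?thesis by simp
qed

lemma card_Dg: "card Dg \<ge> 2 * card (inner N - B)"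
proof -
  have "(\<Sum>b\<in>BL. 2 * card (Z \<inter> cellsOf b)) \<le> (\<Sum>b\<in>BL. card (DgB b) + 2)"
    by (rule sum_mono) (rule card_cells_le)
  moreover have "(\<Sum>b\<in>BL. card (DgB b) + 2) = (\<Sum>b\<in>BL. card (DgB b)) + 2 * card BL"
    unfolding sum.distrib by simp
  moreover have "(\<Sum>b\<in>BL. 2 * card (Z \<inter> cellsOf b)) = 2 * (\<Sum>b\<in>BL. card (Z \<inter> cellsOf b))"
    by (rule sum_distrib_left[symmetric])
  ultimately have "2 * (\<Sum>b\<in>BL. card (Z \<inter> cellsOf b)) \<le> (\<Sum>b\<in>BL. card (DgB b)) + 2 * card BL"
    by linarith
  then show ?thesis using sum_cells card_Dg_ge card_BL count by linarith
qed

end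


lemma has_cycle_4:
  assumes "distinct [p1,p2,p3,p4]" "{p1,p2,p3,p4} \<subseteq> S"
    "adj p1 p2" "adj p2 p3" "adj p3 p4" "adj p4 p1"
  shows "has_cycle S"
  unfolding has_cycle_def
proof (intro exI conjI)
  let ?xs = "[p1,p2,p3,p4]"
  show "3 \<le> length ?xs" by simp
  show "distinct ?xs" using assms(1) .
  show "set ?xs \<subseteq> S" using assms(2) by simp
  show "\<forall>i<length ?xs - 1. adj (?xs ! i) (?xs ! Suc i)"
  proof (intro allI impI)
    fix i assume "i < length ?xs - 1"
    then have "i = 0 \<or> i = 1 \<or> i = 2" by auto
    then show "adj (?xs ! i) (?xs ! Suc i)" using assms(3-5) by auto
  qed
  show "adj (last ?xs) (hd ?xs)" using assms(6) by simp
qed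

lemma square_cycle:
  assumes "adj x y" "adj x g" "fst y \<noteq> fst g" "snd y \<noteq> snd g"
    and "c = (fst y + fst g - fst x, snd y + snd g - snd x)"
    and "{x, y, g, c} \<subseteq> S"
  shows "has_cycle S"
proof -
  obtain a b where x: "x = (a,b)" by (cases x)
  have cy: "y = (a + 1, b) \<or> y = (a - 1, b) \<or> y = (a, b + 1) \<or> y = (a, b - 1)" using adj_cases[OF assms(1)] x by simp
  have cg: "g = (a + 1, b) \<or> g = (a - 1, b) \<or> g = (a, b + 1) \<or> g = (a, b - 1)" using adj_cases[OF assms(2)] x by simp
  have "distinct [x, g, c, y] \<and> adj x g \<and> adj g c \<and> adj c y \<and> adj y x"
    using cy cg assms(3,4) by (elim disjE) (simp_all add: adj_def assms(5) x)
  then show ?thesis using has_cycle_4[of x g c y S] assms(6) by auto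
qed

context core begin

lemma finV': "finite V'" unfolding V'_def using finZ by simp
lemma card_V': "card V' = card Z + 1"
proof -
  have "None \<notin> Some ` Z" by auto
  moreover have "card (Some ` Z) = card Z" by (rule card_image) (simp add: inj_on_def)
  ultimately show ?thesis unfolding V'_def using finZ by simp
qed

lemma edges_ge: "card (edges (Rd N) V') + 2 \<ge> 2 * card V'"
proof -
  define E1 where "E1 = (\<lambda>(p,q). (Some p, Some q)) ` Dg"
  define E2 where "E2 = (\<lambda>k. (None :: cell option, Some k)) ` (corners N - B)"
  define E3 where "E3 = (\<lambda>k. (Some k, None :: cell option)) ` (corners N - B)"
  have cZ: "corners N - B \<subseteq> Z" using corners_box unfolding Z_def by blast
  have fE: "finite (edges (Rd N) V')"
    by (rule finite_subset[of _ "V' \<times> V'"]) (auto simp: edges_def finV')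
  have sub: "E1 \<union> E2 \<union> E3 \<subseteq> edges (Rd N) V'"
    using cZ unfolding E1_def E2_def E3_def edges_def Dg_def V'_def by auto
  have fDg: "finite Dg" by (rule finite_subset[of _ "Z \<times> Z"]) (auto simp: Dg_def finZ)
  have fc: "finite (corners N - B)" unfolding corners_def by simp
  have c1: "card E1 = card Dg" unfolding E1_def by (rule card_image) (auto simp: inj_on_def)
  have c2: "card E2 = card (corners N - B)" unfolding E2_def by (rule card_image) (auto simp: inj_on_def)
  have c3: "card E3 = card (corners N - B)" unfolding E3_def by (rule card_image) (auto simp: inj_on_def)
  have d12: "E1 \<inter> E2 = {}" unfolding E1_def E2_def by auto
  have d3: "(E1 \<union> E2) \<inter> E3 = {}" unfolding E1_def E2_def E3_def by auto
  have f1: "finite E1" "finite E2" "finite E3" unfolding E1_def E2_def E3_def using fDg fc by auto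
  have "card (E1 \<union> E2 \<union> E3) = card E1 + card E2 + card E3"
    using card_Un_disjoint[OF _ _ d12] card_Un_disjoint[OF _ _ d3] f1 by simp
  then have "card Dg + 2 * card (corners N - B) \<le> card (edges (Rd N) V')"
    using card_mono[OF fE sub] c1 c2 c3 by simp
  then show ?thesis using card_Dg card_V' card_Z by simp
qed

definition "Rv x y \<longleftrightarrow> x \<in> V' \<and> y \<in> V' \<and> Rd N x y"

lemma reach_all: "z \<in> Z \<Longrightarrow> Rv\<^sup>*\<^sup>* None (Some z)"
proof (rule ccontr)
  assume zZ: "z \<in> Z" and nr: "\<not> Rv\<^sup>*\<^sup>* None (Some z)"
  define S1 where "S1 = {x \<in> V'. Rv\<^sup>*\<^sup>* None x}"
  define S2 where "S2 = V' - S1"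
  have NS1: "None \<in> S1" unfolding S1_def V'_def by simp
  have zS2: "Some z \<in> S2" using zZ nr unfolding S2_def S1_def V'_def by auto
  have clos: "\<And>x y. x \<in> V' \<Longrightarrow> y \<in> V' \<Longrightarrow> Rd N x y \<Longrightarrow> x \<in> S1 \<longleftrightarrow> y \<in> S1"
  proof -
    fix x y assume h: "x \<in> V'" "y \<in> V'" "Rd N x y"
    show "x \<in> S1 \<longleftrightarrow> y \<in> S1"
    proof
      assume "x \<in> S1"
      then have "Rv\<^sup>*\<^sup>* None x" unfolding S1_def by simp
      moreover have "Rv x y" using h unfolding Rv_def by simp
      ultimately show "y \<in> S1" using h(2) unfolding S1_def by (simp add: rtranclp.rtrancl_into_rtrancl)
    next
      assume "y \<in> S1"
      then have "Rv\<^sup>*\<^sup>* None y" unfolding S1_def by simp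
      moreover have "Rv y x" using h Rd_sym unfolding Rv_def by blast
      ultimately show "x \<in> S1" using h(1) unfolding S1_def by (simp add: rtranclp.rtrancl_into_rtrancl)
    qed
  qed
  have sub: "edges (Rd N) V' \<subseteq> edges (Rd N) S1 \<union> edges (Rd N) S2"
    using clos unfolding edges_def S2_def by auto
  have fS: "finite S1" "finite S2" using finV' unfolding S1_def S2_def by auto
  have fE: "finite (edges (Rd N) S1)" "finite (edges (Rd N) S2)"
    using fS by (auto intro: finite_subset[of _ "S1 \<times> S1"] finite_subset[of _ "S2 \<times> S2"] simp: edges_def)
  have ac: "\<not> gcyc (Rd N) S1" "\<not> gcyc (Rd N) S2"
    using D_acyclic gcyc_mono[of "Rd N" S1 V'] gcyc_mono[of "Rd N" S2 V'] unfolding S1_def S2_def by auto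
  have b1: "card (edges (Rd N) S1) + 2 \<le> 2 * card S1"
    by (rule edges_bound[OF fS(1) _ Rd_irr _ ac(1)]) (use NS1 Rd_sym in auto)
  have b2: "card (edges (Rd N) S2) + 2 \<le> 2 * card S2"
    by (rule edges_bound[OF fS(2) _ Rd_irr _ ac(2)]) (use zS2 Rd_sym in auto)
  have cV: "card V' = card S1 + card S2"
  proof -
    have "V' = S1 \<union> S2" "S1 \<inter> S2 = {}" unfolding S2_def S1_def by auto
    then show ?thesis using card_Un_disjoint fS by metis
  qed
  have "card (edges (Rd N) V') \<le> card (edges (Rd N) S1) + card (edges (Rd N) S2)"
    using card_mono[OF _ sub] card_Un_le[of "edges (Rd N) S1" "edges (Rd N) S2"] fE by fastforce
  then show False using b1 b2 cV edges_ge by linarith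
qed

lemma W_struct: "p \<in> Z \<Longrightarrow> even (fst p + snd p)"
proof -
  assume pZ: "p \<in> Z"
  have evN: "even (int N - 1)" using oddN by simp
  have "Rv\<^sup>*\<^sup>* None x \<Longrightarrow> (\<forall>p. x = Some p \<longrightarrow> even (fst p + snd p))" for x
  proof (induction rule: rtranclp_induct)
    case base then show ?case by simp
  next
    case (step y z)
    show ?case
    proof (intro allI impI)
      fix q assume zq: "z = Some q"
      show "even (fst q + snd q)"
      proof (cases y)
        case None
        then have "q \<in> corners N" using step(2) zq unfolding Rv_def by simp
        then show ?thesis using evN unfolding corners_def by auto
      next
        case (Some p)
        then have d: "diag p q" using step(2) zq unfolding Rv_def by simp
        have ep: "even (fst p + snd p)" using step.IH Some by simp
        have "\<bar>fst p - fst q\<bar> = 1" "\<bar>snd p - snd q\<bar> = 1" using d unfolding diag_def by auto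
        then have "fst q = fst p + 1 \<or> fst q = fst p - 1" "snd q = snd p + 1 \<or> snd q = snd p - 1" by linarith+
        then show ?thesis using ep by presburger
      qed
    qed
  qed
  then show ?thesis using reach_all[OF pZ] by simp
qed

lemma oddsum_in_B: "p \<in> box N \<Longrightarrow> odd (fst p + snd p) \<Longrightarrow> p \<in> B"
  using W_struct unfolding Z_def by blast

lemma final:
  assumes f: "(i,j) \<in> inner N" "odd i" "odd j"
  shows "(i,j) \<notin> B"
proof
  assume fB: "(i,j) \<in> B"
  define P where "P = (\<lambda>x. x \<in> B \<and> ((odd (fst x) \<and> odd (snd x)) \<or>
      (odd (fst x + snd x) \<and> (\<exists>g. adj x g \<and> g \<in> B \<and> odd (fst g) \<and> odd (snd g)))))"
  have "(adj_in B)\<^sup>*\<^sup>* (i,j) y \<Longrightarrow> P y" for y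
  proof (induction rule: rtranclp_induct)
    case base then show ?case using fB f unfolding P_def by simp
  next
    case (step x y)
    have xy: "x \<in> B" "y \<in> B" "adj x y" using step(2) unfolding adj_in_def by auto
    have ysum: "odd (fst x + snd x) \<longleftrightarrow> even (fst y + snd y)"
      using adj_cases[OF xy(3)] by auto
    from step.IH consider (oo) "odd (fst x)" "odd (snd x)"
      | (nw) g where "odd (fst x + snd x)" "adj x g" "g \<in> B" "odd (fst g)" "odd (snd g)"
      unfolding P_def by blast
    then show ?case
    proof cases
      case oo
      then have "odd (fst y + snd y)" using ysum by presburger
      then show ?thesis unfolding P_def using xy oo adj_sym[OF xy(3)] by (metis step.IH P_def)
    next
      case nw
      have ey: "even (fst y + snd y)" using ysum nw(1) by simp
      show ?thesis
      proof (cases "odd (fst y) \<and> odd (snd y)")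
        case True then show ?thesis unfolding P_def using xy by simp
      next
        case False
        then have ee: "even (fst y)" "even (snd y)" using ey by presburger+
        define c where "c = (fst y + fst g - fst x, snd y + snd g - snd x)"
        have ne: "fst y \<noteq> fst g" "snd y \<noteq> snd g" using ee nw(4,5) by auto
        have bx: "x \<in> box N" "y \<in> box N" "g \<in> box N" using xy nw(3) Bbox by auto
        have "c \<in> box N"
        proof -
          have "fst c = fst y \<or> fst c = fst g" "snd c = snd y \<or> snd c = snd g"
            using adj_cases[OF xy(3)] adj_cases[OF nw(2)] ne unfolding c_def by auto
          then show ?thesis using bx unfolding box_def by (cases c) auto
        qed
        moreover have "odd (fst c + snd c)" unfolding c_def fst_conv snd_conv using ey nw(1,4,5) by presburger
        ultimately have cB: "c \<in> B" by (rule oddsum_in_B)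
        have "has_cycle B"
          by (rule square_cycle[OF xy(3) nw(2) ne c_def]) (use xy nw(3) cB in auto)
        then show ?thesis using acyc by simp
      qed
    qed
  qed
  moreover have rB: "(0, 2) \<in> B"
  proof -
    have "(0::int, 2::int) \<in> box N" using n4 unfolding box_def by auto
    moreover have "(0::int, 2::int) \<notin> inner N" unfolding inner_def by auto
    moreover have "(0::int, 2::int) \<notin> corners N" using n4 unfolding corners_def by auto
    ultimately show ?thesis using ring by blast
  qed
  moreover have "(adj_in B)\<^sup>*\<^sup>* (i,j) (0,2)" using conn fB rB unfolding connected_cells_def by blast
  ultimately have "P (0,2)" by blast
  then show False unfolding P_def by simp
qed

end


lemma adj_shift: "adj (x + fst p, y + snd p) (x + fst q, y + snd q) = adj p q"
  unfolding adj_def by (simp add: algebra_simps)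

lemma nb_card: "card {q. adj t q} = 4"
proof -
  obtain a b where t: "t = (a,b)" by (cases t)
  have "{q. adj t q} = {(a+1,b),(a-1,b),(a,b+1),(a,b-1)}"
  proof
    show "{q. adj t q} \<subseteq> {(a+1,b),(a-1,b),(a,b+1),(a,b-1)}" using adj_cases t by fastforce
    show "{(a+1,b),(a-1,b),(a,b+1),(a,b-1)} \<subseteq> {q. adj t q}" using t unfolding adj_def by auto
  qed
  then show ?thesis by simp
qed

lemma nb_fin: "finite {q. adj t q}"
  using nb_card by (metis card.infinite zero_neq_numeral)

locale mainloc =
  fixes A :: "cell set" and N :: nat and x0 y0 :: int
  assumes oddN: "odd N" and N5: "N \<ge> 5"
    and es: "efficiently_structured A"
    and si: "square_interior A N x0 y0"
begin

definition "sg p = (x0 + fst p, y0 + snd p)"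
definition "tau p = (fst p - x0, snd p - y0)"
definition "B = {p. sg p \<in> A}"

lemma sg_tau[simp]: "sg (tau p) = p" unfolding sg_def tau_def by simp
lemma tau_sg[simp]: "tau (sg p) = p" unfolding sg_def tau_def by simp
lemma inj_sg: "inj sg" by (metis injI tau_sg)
lemma adj_sg: "adj (sg p) (sg q) = adj p q" unfolding sg_def by (rule adj_shift)
lemma adj_tau: "adj (tau p) (tau q) = adj p q" by (metis adj_sg sg_tau)
lemma inB: "p \<in> B \<longleftrightarrow> sg p \<in> A" unfolding B_def by simp

lemma poly: "polyomino A" and acA: "acyclic_poly A" and hole1: "\<forall>H\<in>holes A. card H = 1"
  and ob: "card (outer_boundary A) = 2 * nat \<lceil>2 * sqrt (real (card A + card (holes A)))\<rceil>"
  using es unfolding efficiently_structured_def by auto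

lemma finA: "finite A" using poly unfolding polyomino_def by simp
lemma neA: "A \<noteq> {}" using poly unfolding polyomino_def by simp
lemma connA: "connected_cells A" using poly unfolding polyomino_def by simp
lemma ncA: "\<not> has_cycle A" using acA unfolding acyclic_poly_def by simp

lemma Abox: "A \<subseteq> {x0 .. x0 + int N - 1} \<times> {y0 .. y0 + int N - 1}"
  using si unfolding square_interior_def by simp

lemma Bbox: "B \<subseteq> box N"
proof
  fix p assume "p \<in> B"
  then have "sg p \<in> A" by (simp add: inB)
  then have "(x0 + fst p, y0 + snd p) \<in> {x0 .. x0 + int N - 1} \<times> {y0 .. y0 + int N - 1}" using Abox unfolding sg_def by blast
  then show "p \<in> box N" unfolding box_def by (cases p) auto
qed

lemma n4: "int N - 1 \<ge> 4" using N5 by simp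

lemma ring: "box N - inner N - corners N \<subseteq> B"
proof
  fix p assume p: "p \<in> box N - inner N - corners N"
  obtain i j where ij: "p = (i,j)" by (cases p)
  have r: "0 \<le> i \<and> i \<le> int N - 1 \<and> 0 \<le> j \<and> j \<le> int N - 1" using p ij unfolding box_def by auto
  have e: "(i = 0 \<or> i = int N - 1 \<or> j = 0 \<or> j = int N - 1)" using p ij r unfolding inner_def by auto
  have c: "\<not> ((i = 0 \<or> i = int N - 1) \<and> (j = 0 \<or> j = int N - 1))" using p ij unfolding corners_def by auto
  have "(x0 + i, y0 + j) \<in> A" using si r e c unfolding square_interior_def by blast
  then show "p \<in> B" using ij by (simp add: inB sg_def)
qed

lemma conn: "connected_cells B"
proof -
  have "(adj_in A)\<^sup>*\<^sup>* u v \<Longrightarrow> (adj_in B)\<^sup>*\<^sup>* (tau u) (tau v)" for u v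
  proof (induction rule: rtranclp_induct)
    case base then show ?case by simp
  next
    case (step y z)
    have "adj_in B (tau y) (tau z)" using step(2) unfolding adj_in_def by (simp add: inB adj_tau)
    then show ?case using step.IH by (simp add: rtranclp.rtrancl_into_rtrancl)
  qed
  then show ?thesis using connA unfolding connected_cells_def by (metis inB tau_sg)
qed

lemma acyc: "\<not> has_cycle B"
proof
  assume "has_cycle B"
  then obtain xs where h: "length xs \<ge> 3" "distinct xs" "set xs \<subseteq> B"
      "\<forall>i < length xs - 1. adj (xs ! i) (xs ! Suc i)" "adj (last xs) (hd xs)"
    unfolding has_cycle_def by blast
  have "has_cycle A"
    unfolding has_cycle_def
  proof (intro exI conjI)
    show "3 \<le> length (map sg xs)" using h(1) by simp
    show "distinct (map sg xs)" using h(2) inj_sg by (simp add: distinct_map inj_on_subset[OF inj_sg])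
    show "set (map sg xs) \<subseteq> A" using h(3) by (auto simp: inB)
    show "\<forall>i<length (map sg xs) - 1. adj (map sg xs ! i) (map sg xs ! Suc i)"
      using h(4) by (simp add: adj_sg)
    have "xs \<noteq> []" using h(1) by auto
    then show "adj (last (map sg xs)) (hd (map sg xs))" using h(5) by (simp add: last_map hd_map adj_sg)
  qed
  then show False using ncA by simp
qed

lemma comp_inner:
  assumes "tau u \<in> inner N" "(adj_in (- A))\<^sup>*\<^sup>* u v"
  shows "tau v \<in> inner N"
  using assms(2)
proof (induction rule: rtranclp_induct)
  case base then show ?case using assms(1) .
next
  case (step y z)
  have z: "z \<notin> A" "adj y z" using step(2) unfolding adj_in_def by auto
  have a: "adj (tau y) (tau z)" using z(2) by (simp add: adj_tau)
  have zb: "tau z \<in> box N" using step.IH adj_cases[OF a] n4 unfolding inner_def box_def by auto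
  have "tau z \<notin> B" using z(1) by (simp add: inB)
  then have "tau z \<notin> box N - inner N - corners N" using ring by blast
  moreover have "tau z \<notin> corners N" using step.IH adj_cases[OF a] n4 unfolding inner_def corners_def by auto
  ultimately show ?case using zb by blast
qed

lemma comp_fin: "tau u \<in> inner N \<Longrightarrow> finite (comp_of (- A) u)"
proof -
  assume h: "tau u \<in> inner N"
  have "comp_of (- A) u \<subseteq> sg ` inner N"
  proof
    fix v assume "v \<in> comp_of (- A) u"
    then have "tau v \<in> inner N" using comp_inner[OF h] unfolding comp_of_def by simp
    then show "v \<in> sg ` inner N" by (metis image_eqI sg_tau)
  qed
  moreover have "finite (inner N)" unfolding inner_def by simp
  ultimately show ?thesis by (meson finite_imageI finite_subset)
qed

lemma singleton_hole:
  assumes "tau u \<in> inner N" "u \<notin> A"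
  shows "comp_of (- A) u = {u}" "{u} \<in> holes A"
proof -
  have H: "comp_of (- A) u \<in> holes A" using assms comp_fin unfolding holes_def by blast
  then have "card (comp_of (- A) u) = 1" using hole1 by blast
  moreover have "u \<in> comp_of (- A) u" unfolding comp_of_def by simp
  ultimately show "comp_of (- A) u = {u}" by (metis card_1_singletonE singletonD)
  then show "{u} \<in> holes A" using H by simp
qed

lemma iso: "p \<in> inner N \<Longrightarrow> p \<notin> B \<Longrightarrow> adj p q \<Longrightarrow> q \<in> B"
proof (rule ccontr)
  assume h: "p \<in> inner N" "p \<notin> B" "adj p q" "q \<notin> B"
  have c: "comp_of (- A) (sg p) = {sg p}" using singleton_hole(1)[of "sg p"] h(1,2) by (simp add: inB)
  have "adj_in (- A) (sg p) (sg q)" using h(2,3,4) unfolding adj_in_def by (simp add: inB adj_sg)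
  then have "sg q \<in> comp_of (- A) (sg p)" unfolding comp_of_def by simp
  then have "sg q = sg p" using c by simp
  then have "q = p" by (metis tau_sg)
  then show False using h(3) unfolding adj_def by simp
qed

end


context mainloc begin

lemma finB: "finite B"
proof -
  have "B = tau ` A"
  proof
    show "B \<subseteq> tau ` A"
    proof
      fix p assume "p \<in> B"
      then have "sg p \<in> A" by (simp add: inB)
      then show "p \<in> tau ` A" using tau_sg[of p] by (metis image_eqI)
    qed
    show "tau ` A \<subseteq> B" by (auto simp: inB)
  qed
  then show ?thesis using finA by simp
qed

lemma cardB: "card B = card A"
proof -
  have "A = sg ` B"
  proof
    show "A \<subseteq> sg ` B"
    proof
      fix t assume "t \<in> A"
      then have "tau t \<in> B" by (simp add: inB)
      then show "t \<in> sg ` B" using sg_tau[of t] by (metis image_eqI)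
    qed
    show "sg ` B \<subseteq> A" by (auto simp: inB)
  qed
  moreover have "card (sg ` B) = card B" by (rule card_image) (rule inj_on_subset[OF inj_sg], simp)
  ultimately show ?thesis by simp
qed

lemma A_tau_box: "t \<in> A \<Longrightarrow> tau t \<in> box N"
  using Bbox by (metis inB sg_tau subsetD)

lemma holes_struct:
  assumes "H \<in> holes A"
  shows "\<exists>u. H = {u} \<and> u \<notin> A \<and> tau u \<in> inner N \<and> (\<forall>t. adj u t \<longrightarrow> t \<in> A)"
proof -
  obtain p where p: "p \<notin> A" "H = comp_of (- A) p" "finite H" using assms unfolding holes_def by blast
  have c1: "card H = 1" using hole1 assms by blast
  have "p \<in> H" using p(2) unfolding comp_of_def by simp
  then have Hp: "H = {p}" using c1 by (metis card_1_singletonE singletonD)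
  have nb: "\<forall>t. adj p t \<longrightarrow> t \<in> A"
  proof (intro allI impI)
    fix t assume a: "adj p t"
    show "t \<in> A"
    proof (rule ccontr)
      assume "t \<notin> A"
      then have "adj_in (- A) p t" using a p(1) unfolding adj_in_def by simp
      then have "t \<in> H" using p(2) unfolding comp_of_def by simp
      then have "t = p" using Hp by simp
      then show False using a unfolding adj_def by simp
    qed
  qed
  have "tau p \<in> inner N"
  proof (rule ccontr)
    assume ni: "tau p \<notin> inner N"
    obtain i j where ij: "tau p = (i,j)" by (cases "tau p")
    have pij: "p = (x0 + i, y0 + j)" using ij by (metis sg_def sg_tau fst_conv snd_conv)
    have "i \<le> 0 \<or> i \<ge> int N - 1 \<or> j \<le> 0 \<or> j \<ge> int N - 1" using ni ij unfolding inner_def by auto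
    then obtain t where t: "adj p t" "tau t \<notin> box N"
    proof (elim disjE)
      assume "i \<le> 0" then show ?thesis using that[of "(x0 + i - 1, y0 + j)"] pij unfolding adj_def tau_def box_def by auto
    next
      assume "i \<ge> int N - 1" then show ?thesis using that[of "(x0 + i + 1, y0 + j)"] pij unfolding adj_def tau_def box_def by auto
    next
      assume "j \<le> 0" then show ?thesis using that[of "(x0 + i, y0 + j - 1)"] pij unfolding adj_def tau_def box_def by auto
    next
      assume "j \<ge> int N - 1" then show ?thesis using that[of "(x0 + i, y0 + j + 1)"] pij unfolding adj_def tau_def box_def by auto
    qed
    then show False using nb A_tau_box by blast
  qed
  then show ?thesis using Hp p(1) nb by blast
qed

definition "U = \<Union>(holes A)"

lemma holes_U: "holes A = (\<lambda>u. {u}) ` U"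
proof
  show "holes A \<subseteq> (\<lambda>u. {u}) ` U"
  proof
    fix H assume H: "H \<in> holes A"
    then obtain u where "H = {u}" using holes_struct by blast
    then show "H \<in> (\<lambda>u. {u}) ` U" using H unfolding U_def by blast
  qed
  show "(\<lambda>u. {u}) ` U \<subseteq> holes A"
  proof
    fix H assume "H \<in> (\<lambda>u. {u}) ` U"
    then obtain u H' where u: "H = {u}" "u \<in> H'" "H' \<in> holes A" unfolding U_def by blast
    then obtain v where "H' = {v}" using holes_struct by blast
    then show "H \<in> holes A" using u by simp
  qed
qed

lemma U_props: "u \<in> U \<Longrightarrow> u \<notin> A \<and> tau u \<in> inner N \<and> (\<forall>t. adj u t \<longrightarrow> t \<in> A)"
  unfolding U_def using holes_struct by fastforce

lemma U_sub: "U \<subseteq> sg ` (inner N - B)"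
proof
  fix u assume "u \<in> U"
  then have "u \<notin> A" "tau u \<in> inner N" using U_props by auto
  then have "tau u \<in> inner N - B" by (simp add: inB)
  then show "u \<in> sg ` (inner N - B)" by (metis image_eqI sg_tau)
qed

lemma finU: "finite U"
  using U_sub by (rule finite_subset) (simp add: inner_def)

lemma card_holes: "card (holes A) = card U"
  unfolding holes_U by (rule card_image) (simp add: inj_on_def)

lemma h_le: "card (holes A) \<le> card (inner N - B)"
proof -
  have "card U \<le> card (sg ` (inner N - B))" using U_sub by (rule card_mono[rotated]) (simp add: inner_def)
  also have "\<dots> = card (inner N - B)" by (rule card_image) (rule inj_on_subset[OF inj_sg], simp)
  finally show ?thesis using card_holes by simp
qed

lemma boundary_count: "4 * card A = card (edges adj A) + card (outer_boundary A) + 4 * card (holes A)"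
proof -
  define Pall where "Pall = Sigma A (\<lambda>t. {q. adj t q})"
  define PH where "PH = {(t,u). t \<in> A \<and> adj t u \<and> u \<in> U}"
  have cP: "card Pall = 4 * card A" unfolding Pall_def using finA nb_fin nb_card by simp
  have eq: "Pall = edges adj A \<union> outer_boundary A \<union> PH"
  proof
    show "Pall \<subseteq> edges adj A \<union> outer_boundary A \<union> PH"
    proof
      fix e assume "e \<in> Pall"
      then obtain t u where e: "e = (t,u)" "t \<in> A" "adj t u" unfolding Pall_def by blast
      show "e \<in> edges adj A \<union> outer_boundary A \<union> PH"
      proof (cases "u \<in> A")
        case True then show ?thesis using e unfolding edges_def by blast
      next
        case False
        show ?thesis
        proof (cases "\<forall>H\<in>holes A. u \<notin> H")
          case True then show ?thesis using e False unfolding outer_boundary_def by blast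
        next
          case False then have "u \<in> U" unfolding U_def by blast
          then show ?thesis using e unfolding PH_def by blast
        qed
      qed
    qed
    show "edges adj A \<union> outer_boundary A \<union> PH \<subseteq> Pall"
      unfolding Pall_def edges_def outer_boundary_def PH_def by blast
  qed
  have fP: "finite Pall" unfolding Pall_def using finA nb_fin by simp
  have d1: "edges adj A \<inter> outer_boundary A = {}" unfolding edges_def outer_boundary_def by blast
  have d2: "(edges adj A \<union> outer_boundary A) \<inter> PH = {}"
    unfolding edges_def outer_boundary_def PH_def U_def using U_props U_def by blast
  have f3: "finite (edges adj A)" "finite (outer_boundary A)" "finite PH"
    using fP eq by (auto intro: finite_subset)
  have "card Pall = card (edges adj A) + card (outer_boundary A) + card PH"
    unfolding eq using card_Un_disjoint[OF _ _ d1] card_Un_disjoint[OF _ _ d2] f3 by simp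
  moreover have "card PH = 4 * card U"
  proof -
    have "PH = (\<lambda>(u,t). (t,u)) ` Sigma U (\<lambda>u. {t. adj u t})"
    proof
      show "PH \<subseteq> (\<lambda>(u,t). (t,u)) ` Sigma U (\<lambda>u. {t. adj u t})"
      proof
        fix e assume "e \<in> PH"
        then obtain t u where e: "e = (t,u)" "adj t u" "u \<in> U" unfolding PH_def by blast
        then have "(u,t) \<in> Sigma U (\<lambda>u. {t. adj u t})" using adj_sym by blast
        then show "e \<in> (\<lambda>(u,t). (t,u)) ` Sigma U (\<lambda>u. {t. adj u t})" using e by force
      qed
      show "(\<lambda>(u,t). (t,u)) ` Sigma U (\<lambda>u. {t. adj u t}) \<subseteq> PH"
        unfolding PH_def using U_props adj_sym by fastforce
    qed
    moreover have "inj_on (\<lambda>(u,t). (t,u)) (Sigma U (\<lambda>u. {t. adj u t}))" by (auto simp: inj_on_def)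
    ultimately have "card PH = card (Sigma U (\<lambda>u. {t. adj u t}))" by (simp add: card_image)
    also have "\<dots> = 4 * card U" using finU nb_fin nb_card by simp
    finally show ?thesis .
  qed
  ultimately show ?thesis using cP card_holes by simp
qed

lemma card_box: "card (box N) = N * N" unfolding box_def card_cartesian_product by simp

lemma nB_e: "card B + card (inner N - B) \<le> N * N"
proof -
  have "B \<union> (inner N - B) \<subseteq> box N" using Bbox by (auto simp: inner_def box_def)
  then have "card (B \<union> (inner N - B)) \<le> N * N" using card_box by (metis card_mono finite_SigmaI finite_atLeastAtMost_int box_def)
  moreover have "card (B \<union> (inner N - B)) = card B + card (inner N - B)"
    by (rule card_Un_disjoint) (auto simp: finB inner_def)
  ultimately show ?thesis by simp
qed

lemma box_le: "N * N \<le> card B + card (inner N - B) + card (corners N - B)"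
proof -
  have "box N \<subseteq> B \<union> (inner N - B) \<union> (corners N - B)" using ring by blast
  then have "N * N \<le> card (B \<union> (inner N - B) \<union> (corners N - B))"
    using card_box by (metis card_mono finite_Un finB finite_Diff finite_insert finite.emptyI inner_def corners_def finite_SigmaI finite_atLeastAtMost_int)
  also have "\<dots> \<le> card (B \<union> (inner N - B)) + card (corners N - B)" by (rule card_Un_le)
  also have "\<dots> \<le> card B + card (inner N - B) + card (corners N - B)" using card_Un_le[of B "inner N - B"] by linarith
  finally show ?thesis .
qed

lemma ob_le: "card (outer_boundary A) \<le> 4 * N"
proof -
  have "card A + card (holes A) \<le> N * N" using nB_e h_le cardB by simp
  then have "real (card A + card (holes A)) \<le> real N ^ 2" by (simp add: power2_eq_square flip: of_nat_mult)
  then have "sqrt (real (card A + card (holes A))) \<le> sqrt (real N ^ 2)" by (rule real_sqrt_le_mono)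
  then have "sqrt (real (card A + card (holes A))) \<le> real N" by simp
  then have "2 * sqrt (real (card A + card (holes A))) \<le> real_of_int (int (2 * N))" by simp
  then have "\<lceil>2 * sqrt (real (card A + card (holes A)))\<rceil> \<le> int (2 * N)" by (simp add: ceiling_le_iff)
  then have "nat \<lceil>2 * sqrt (real (card A + card (holes A)))\<rceil> \<le> 2 * N" by (metis nat_le_iff)
  then show ?thesis using ob by simp
qed

lemma count: "(N-1)*(N-1) \<le> 3 * card (inner N - B) + card (corners N - B)"
proof -
  have eb: "card (edges adj A) + 2 \<le> 2 * card A"
  proof (rule edges_bound[OF finA neA])
    show "\<And>x. \<not> adj x x" unfolding adj_def by simp
    show "\<And>x y. adj x y \<Longrightarrow> adj y x" by (rule adj_sym)
    show "\<not> gcyc adj A" using ncA has_cycle_gcyc by simp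
  qed
  have sq: "(N-1)*(N-1) + 2 * N = N * N + 1" using N5
    by (cases N) (auto simp: algebra_simps)
  show ?thesis using boundary_count eb ob_le h_le box_le cardB sq by linarith
qed

lemma core_inst: "core B N"
  by (unfold_locales) (use oddN N5 Bbox ring conn acyc iso count in auto)

lemma result: "1 \<le> i \<Longrightarrow> i \<le> int N - 2 \<Longrightarrow> 1 \<le> j \<Longrightarrow> j \<le> int N - 2 \<Longrightarrow> odd i \<Longrightarrow> odd j
           \<Longrightarrow> {(x0 + i, y0 + j)} \<in> holes A"
proof -
  assume h: "1 \<le> i" "i \<le> int N - 2" "1 \<le> j" "j \<le> int N - 2" "odd i" "odd j"
  have ij: "(i,j) \<in> inner N" using h unfolding inner_def by auto
  have "(i,j) \<notin> B" using core.final[OF core_inst ij h(5,6)] .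
  then have u: "(x0 + i, y0 + j) \<notin> A" by (simp add: inB sg_def)
  have "tau (x0 + i, y0 + j) \<in> inner N" using ij unfolding tau_def by simp
  then show ?thesis using singleton_hole(2) u by blast
qed

end

theorem lemma9:
  fixes A :: "cell set" and N :: nat and x0 y0 :: int
  assumes "odd N" and "N \<ge> 5"
    and "efficiently_structured A"
    and "square_interior A N x0 y0"
  shows "\<forall>i j. 1 \<le> i \<and> i \<le> int N - 2 \<and> 1 \<le> j \<and> j \<le> int N - 2 \<and> odd i \<and> odd j
           \<longrightarrow> {(x0 + i, y0 + j)} \<in> holes A"
proof -
  interpret M: mainloc A N x0 y0 using assms by (unfold_locales)
  show ?thesis using M.result by blast
qed


end
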